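(* Let $|\psi\rangle,|\phi\rangle,|e\rangle,|f\rangle$ be unit vectors in $\mathbb{C}^2$ and let $\mathcal{UE}$ be the set of unital entanglement breaking channels on $\mathcal{L}(\mathbb{C}^2)$. Then $$\max_{\Psi\in\mathcal{UE}}\left\{\frac12\langle e|\Psi(|\psi\rangle\langle\psi|)|e\rangle+\frac12\langle f|\Psi(|\phi\rangle\langle\phi|)|f\rangle\right\}=\frac12\left(1+\max\left\{|\langle\psi|\phi\rangle||\langle e|f\rangle|,\sqrt{(1-|\langle\psi|\phi\rangle|^2)(1-|\langle e|f\rangle|^2)}\right\}\right).$$ The right-hand side equals $1$ if and only if $|\langle\psi|\phi\rangle|=|\langle e|f\rangle|=1$ or $|\langle\psi|\phi\rangle|=|\langle e|f\rangle|=0$; consequently, $(|\psi\rangle,|\phi\rangle)$ is jointly convertible into $(|e\rangle,|f\rangle)$ within $\mathcal{UE}$ if and only if $|\langle\psi|\phi\rangle|=|\langle e|f\rangle|=1$ or $|\langle\psi|\phi\rangle|=|\langle e|f\rangle|=0$.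
   Context: A quantum channel (linear, completely positive, trace preserving map on $\mathcal{L}(\mathbb{C}^2)$) $\Psi$ is unital if $\Psi(I)=I$ and entanglement breaking if $(\mathrm{id}\otimes\Psi)(\rho)$ is separable for every density operator $\rho$ on $\mathbb{C}^2\otimes\mathbb{C}^2$. For a set $\mathcal{X}$ of quantum channels, $(|\psi\rangle,|\phi\rangle)$ is jointly convertible into $(|e\rangle,|f\rangle)$ within $\mathcal{X}$ if there exists $\Psi\in\mathcal{X}$ with $\Psi(|\psi\rangle\langle\psi|)=|e\rangle\langle e|$ and $\Psi(|\phi\rangle\langle\phi|)=|f\rangle\langle f|$. *)

theory Defs
  imports "HOL-Analysis.Analysis"
begin

type_synonym cvec2 = "complex^2"
type_synonym cmat2 = "complex^2^2"

definition braket :: "cvec2 \<Rightarrow> cvec2 \<Rightarrow> complex" where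
  "braket x y = (\<Sum>i\<in>UNIV. cnj (x$i) * y$i)"

definition ketbra :: "cvec2 \<Rightarrow> cvec2 \<Rightarrow> cmat2" where
  "ketbra x y = (\<chi> i j. x$i * cnj (y$j))"

definition sandwich :: "cvec2 \<Rightarrow> cmat2 \<Rightarrow> complex" where
  "sandwich x A = (\<Sum>i\<in>UNIV. \<Sum>j\<in>UNIV. cnj (x$i) * A$i$j * x$j)"

definition ctrace :: "cmat2 \<Rightarrow> complex" where
  "ctrace A = (\<Sum>i\<in>UNIV. A$i$i)"

definition cscale :: "complex \<Rightarrow> cmat2 \<Rightarrow> cmat2" where
  "cscale c A = (\<chi> i j. c * A$i$j)"

definition psd2 :: "cmat2 \<Rightarrow> bool" where
  "psd2 A \<longleftrightarrow> (\<forall>v. Im (sandwich v A) = 0 \<and> Re (sandwich v A) \<ge> 0)"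

definition density2 :: "cmat2 \<Rightarrow> bool" where
  "density2 A \<longleftrightarrow> psd2 A \<and> ctrace A = 1"

text \<open>n x n complex matrices (indices < n), used for the ancilla factor C^n.\<close>
definition ndensity :: "nat \<Rightarrow> (nat \<Rightarrow> nat \<Rightarrow> complex) \<Rightarrow> bool" where
  "ndensity n S \<longleftrightarrow>
     (\<forall>v::nat \<Rightarrow> complex. let q = (\<Sum>a<n. \<Sum>b<n. cnj (v a) * S a b * v b)
        in Im q = 0 \<and> Re q \<ge> 0) \<and> (\<Sum>a<n. S a a) = 1"

text \<open>Operators on C^n \<otimes> C^2 in block form: M a b (a, b < n) is the 2x2 block.\<close>
definition block_psd :: "nat \<Rightarrow> (nat \<Rightarrow> nat \<Rightarrow> cmat2) \<Rightarrow> bool" where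
  "block_psd n M \<longleftrightarrow>
     (\<forall>v::nat \<Rightarrow> cvec2. let q = (\<Sum>a<n. \<Sum>b<n. \<Sum>i\<in>UNIV. \<Sum>j\<in>UNIV.
                                   cnj (v a $ i) * (M a b $ i $ j) * (v b $ j))
        in Im q = 0 \<and> Re q \<ge> 0)"

definition block_density :: "nat \<Rightarrow> (nat \<Rightarrow> nat \<Rightarrow> cmat2) \<Rightarrow> bool" where
  "block_density n M \<longleftrightarrow> block_psd n M \<and> (\<Sum>a<n. ctrace (M a a)) = 1"

text \<open>Separable states on C^2 \<otimes> C^2: finite convex combinations of product states.\<close>
definition separable22 :: "(nat \<Rightarrow> nat \<Rightarrow> cmat2) \<Rightarrow> bool" where
  "separable22 M \<longleftrightarrow>
     (\<exists>m (p::nat \<Rightarrow> real) S \<tau>.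
        (\<forall>k<m. 0 \<le> p k \<and> ndensity 2 (S k) \<and> density2 (\<tau> k)) \<and>
        (\<Sum>k<m. p k) = 1 \<and>
        (\<forall>a<2. \<forall>b<2. M a b = (\<Sum>k<m. cscale (complex_of_real (p k) * S k a b) (\<tau> k))))"

definition clinear2 :: "(cmat2 \<Rightarrow> cmat2) \<Rightarrow> bool" where
  "clinear2 \<Psi> \<longleftrightarrow> (\<forall>A B. \<Psi> (A + B) = \<Psi> A + \<Psi> B) \<and> (\<forall>c A. \<Psi> (cscale c A) = cscale c (\<Psi> A))"

text \<open>Complete positivity: id_n \<otimes> \<Psi> is positive for every ancilla dimension n.\<close>
definition completely_positive2 :: "(cmat2 \<Rightarrow> cmat2) \<Rightarrow> bool" where
  "completely_positive2 \<Psi> \<longleftrightarrow>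
     (\<forall>n M. block_psd n M \<longrightarrow> block_psd n (\<lambda>a b. \<Psi> (M a b)))"

definition trace_preserving2 :: "(cmat2 \<Rightarrow> cmat2) \<Rightarrow> bool" where
  "trace_preserving2 \<Psi> \<longleftrightarrow> (\<forall>A. ctrace (\<Psi> A) = ctrace A)"

definition quantum_channel2 :: "(cmat2 \<Rightarrow> cmat2) \<Rightarrow> bool" where
  "quantum_channel2 \<Psi> \<longleftrightarrow> clinear2 \<Psi> \<and> completely_positive2 \<Psi> \<and> trace_preserving2 \<Psi>"

definition unital2 :: "(cmat2 \<Rightarrow> cmat2) \<Rightarrow> bool" where
  "unital2 \<Psi> \<longleftrightarrow> \<Psi> (mat 1) = mat 1"

definition entanglement_breaking2 :: "(cmat2 \<Rightarrow> cmat2) \<Rightarrow> bool" where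
  "entanglement_breaking2 \<Psi> \<longleftrightarrow>
     (\<forall>\<rho>. block_density 2 \<rho> \<longrightarrow> separable22 (\<lambda>a b. \<Psi> (\<rho> a b)))"

definition UE :: "(cmat2 \<Rightarrow> cmat2) set" where
  "UE = {\<Psi>. quantum_channel2 \<Psi> \<and> unital2 \<Psi> \<and> entanglement_breaking2 \<Psi>}"

definition jointly_convertible ::
  "(cmat2 \<Rightarrow> cmat2) set \<Rightarrow> cvec2 \<Rightarrow> cvec2 \<Rightarrow> cvec2 \<Rightarrow> cvec2 \<Rightarrow> bool" where
  "jointly_convertible X \<psi> \<phi> e f \<longleftrightarrow>
     (\<exists>\<Psi>\<in>X. \<Psi> (ketbra \<psi> \<psi>) = ketbra e e \<and> \<Psi> (ketbra \<phi> \<phi>) = ketbra f f)"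

end

theory Submission
  imports Defs
begin



lemma prod_le_half_sq: "(x::real)*y \<le> (x^2+y^2)/2"
proof -
  have "0 \<le> (x-y)^2" by simp
  thus ?thesis by (simp add: power2_eq_square algebra_simps)
qed

lemma key_real:
  fixes a a' b b' \<alpha> \<beta> \<gamma> \<delta> :: real
  assumes a: "a \<ge> 0" "a' \<ge> 0" "a^2 + a'^2 = 1" and b: "b \<ge> 0" "b' \<ge> 0" "b^2 + b'^2 = 1"
    and h1: "\<alpha>^2 \<le> 4*a^2" "\<beta>^2 \<le> 4*a'^2" "\<alpha>^2*a'^2 + \<beta>^2*a^2 \<le> 4*a^2*a'^2"
    and h2: "\<gamma>^2 \<le> 4*b^2" "\<delta>^2 \<le> 4*b'^2" "\<gamma>^2*b'^2 + \<delta>^2*b^2 \<le> 4*b^2*b'^2"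
  shows "\<alpha>*\<gamma> + \<beta>*\<delta> \<le> 4 * max (a*b) (a'*b')"
proof -
  have abs1: "\<bar>\<alpha>\<bar> \<le> 2*a" "\<bar>\<beta>\<bar> \<le> 2*a'" "\<bar>\<gamma>\<bar> \<le> 2*b" "\<bar>\<delta>\<bar> \<le> 2*b'"
  proof -
    have hh: "\<bar>x\<bar> \<le> 2*c" if "x^2 \<le> 4*c^2" "c \<ge> 0" for x c :: real
    proof (rule power2_le_imp_le)
      show "\<bar>x\<bar>^2 \<le> (2*c)^2" using that by (simp add: power_mult_distrib)
    qed (use that in simp)
    show "\<bar>\<alpha>\<bar> \<le> 2*a" "\<bar>\<beta>\<bar> \<le> 2*a'" "\<bar>\<gamma>\<bar> \<le> 2*b" "\<bar>\<delta>\<bar> \<le> 2*b'"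
      using hh h1 h2 a b by auto
  qed
  have pr: "x*y \<le> \<bar>x\<bar>*\<bar>y\<bar>" for x y :: real by (simp add: abs_mult[symmetric])
  have t1: "\<alpha>*\<gamma> \<le> 4*(a*b)" using pr[of \<alpha> \<gamma>] abs1 mult_mono[of "\<bar>\<alpha>\<bar>" "2*a" "\<bar>\<gamma>\<bar>" "2*b"] a b by simp
  have t2: "\<beta>*\<delta> \<le> 4*(a'*b')" using pr[of \<beta> \<delta>] abs1 mult_mono[of "\<bar>\<beta>\<bar>" "2*a'" "\<bar>\<delta>\<bar>" "2*b'"] a b by simp
  show ?thesis
  proof (cases "a = 0 \<or> a' = 0 \<or> b = 0 \<or> b' = 0")
    case True
    then show ?thesis
    proof (elim disjE)
      assume "a = 0" then have "\<alpha> = 0" using abs1 by simp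
      then show ?thesis using t2 by simp
    next
      assume "a' = 0" then have "\<beta> = 0" using abs1 by simp
      then show ?thesis using t1 by simp
    next
      assume "b = 0" then have "\<gamma> = 0" using abs1 by simp
      then show ?thesis using t2 by simp
    next
      assume "b' = 0" then have "\<delta> = 0" using abs1 by simp
      then show ?thesis using t1 by simp
    qed
  next
    case False
    then have pos: "a > 0" "a' > 0" "b > 0" "b' > 0" using a b by auto
    define X where "X = \<alpha>/(2*a)"
    define Y where "Y = \<beta>/(2*a')"
    define Z where "Z = \<gamma>/(2*b)"
    define W where "W = \<delta>/(2*b')"
    have XY: "X^2 + Y^2 \<le> 1"
    proof -
      have "X^2 + Y^2 = (\<alpha>^2*a'^2 + \<beta>^2*a^2) / (4*a^2*a'^2)"
        using pos by (simp add: X_def Y_def power_divide field_simps power_mult_distrib)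
      also have "\<dots> \<le> 1" using h1(3) pos by (simp add: divide_le_eq_1)
      finally show ?thesis .
    qed
    have ZW: "Z^2 + W^2 \<le> 1"
    proof -
      have "Z^2 + W^2 = (\<gamma>^2*b'^2 + \<delta>^2*b^2) / (4*b^2*b'^2)"
        using pos by (simp add: Z_def W_def power_divide field_simps power_mult_distrib)
      also have "\<dots> \<le> 1" using h2(3) pos by (simp add: divide_le_eq_1)
      finally show ?thesis .
    qed
    have e1: "\<alpha>*\<gamma> = 4*(a*b)*(X*Z)" using pos by (simp add: X_def Z_def field_simps)
    have e2: "\<beta>*\<delta> = 4*(a'*b')*(Y*W)" using pos by (simp add: Y_def W_def field_simps)
    let ?M = "max (a*b) (a'*b')"
    have "4*(a*b)*(X*Z) \<le> 4*?M*((X^2+Z^2)/2)"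
    proof -
      have "(a*b)*(X*Z) \<le> (a*b)*((X^2+Z^2)/2)" using prod_le_half_sq[of X Z] pos
        by (intro mult_left_mono) auto
      also have "\<dots> \<le> ?M*((X^2+Z^2)/2)" by (intro mult_right_mono) auto
      finally show ?thesis by (simp add: mult_ac)
    qed
    moreover have "4*(a'*b')*(Y*W) \<le> 4*?M*((Y^2+W^2)/2)"
    proof -
      have "(a'*b')*(Y*W) \<le> (a'*b')*((Y^2+W^2)/2)" using prod_le_half_sq[of Y W] pos
        by (intro mult_left_mono) auto
      also have "\<dots> \<le> ?M*((Y^2+W^2)/2)" by (intro mult_right_mono) auto
      finally show ?thesis by (simp add: mult_ac)
    qed
    moreover have "4*?M*((X^2+Z^2)/2) + 4*?M*((Y^2+W^2)/2) = 4*?M*((X^2+Y^2+(Z^2+W^2))/2)"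
      by (simp add: field_simps)
    moreover have "4*?M*((X^2+Y^2+(Z^2+W^2))/2) \<le> 4*?M*1"
      using XY ZW pos by (intro mult_left_mono) (auto simp: le_max_iff_disj)
    ultimately show ?thesis using e1 e2 by linarith
  qed
qed



datatype r3 = R3 real real real

fun dot :: "r3 \<Rightarrow> r3 \<Rightarrow> real" where
  "dot (R3 a b c) (R3 x y z) = a*x + b*y + c*z"

lemma gram3:
  fixes m1 m2 m3 a1 a2 a3 b1 b2 b3 :: real
  assumes "a1*b1+a2*b2+a3*b3 = 0"
  shows "(m1*a1+m2*a2+m3*a3)^2*(b1^2+b2^2+b3^2) + (m1*b1+m2*b2+m3*b3)^2*(a1^2+a2^2+a3^2)
     + (m1*(a2*b3-a3*b2) + m2*(a3*b1-a1*b3) + m3*(a1*b2-a2*b1))^2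
     = (m1^2+m2^2+m3^2)*(a1^2+a2^2+a3^2)*(b1^2+b2^2+b3^2)"
  using assms by algebra

lemma cs3:
  fixes m1 m2 m3 a1 a2 a3 :: real
  shows "(m1*a1+m2*a2+m3*a3)^2 \<le> (m1^2+m2^2+m3^2)*(a1^2+a2^2+a3^2)"
proof -
  have "(m1^2+m2^2+m3^2)*(a1^2+a2^2+a3^2) - (m1*a1+m2*a2+m3*a3)^2
     = (m1*a2-m2*a1)^2 + (m1*a3-m3*a1)^2 + (m2*a3-m3*a2)^2" by algebra
  moreover have "(m1*a2-m2*a1)^2 + (m1*a3-m3*a1)^2 + (m2*a3-m3*a2)^2 \<ge> 0" by simp
  ultimately show ?thesis by linarith
qed


lemma bloch_bound:
  assumes m: "dot m m \<le> 1" and t: "dot t t \<le> 1"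
    and p: "dot p p = 1" and q: "dot q q = 1" and e: "dot e e = 1" and f: "dot f f = 1"
    and a: "a \<ge> 0" "a^2 = (1 + dot p q)/2" and b: "b \<ge> 0" "b^2 = (1 + dot e f)/2"
  shows "dot m p * dot t e + dot m q * dot t f \<le> 2 * max (a*b) (sqrt ((1-a^2)*(1-b^2)))"
proof -
  obtain m1 m2 m3 where mm: "m = R3 m1 m2 m3" by (cases m)
  obtain t1 t2 t3 where tt: "t = R3 t1 t2 t3" by (cases t)
  obtain p1 p2 p3 where pp: "p = R3 p1 p2 p3" by (cases p)
  obtain q1 q2 q3 where qq: "q = R3 q1 q2 q3" by (cases q)
  obtain e1 e2 e3 where ee: "e = R3 e1 e2 e3" by (cases e)
  obtain f1 f2 f3 where ff: "f = R3 f1 f2 f3" by (cases f)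
  define a' where "a' = sqrt (1 - a^2)"
  define b' where "b' = sqrt (1 - b^2)"
  have pq1: "dot p q \<le> 1"
  proof -
    have "0 \<le> (p1-q1)^2 + (p2-q2)^2 + (p3-q3)^2" by simp
    then show ?thesis using p q by (simp add: pp qq power2_eq_square algebra_simps)
  qed
  have ef1: "dot e f \<le> 1"
  proof -
    have "0 \<le> (e1-f1)^2 + (e2-f2)^2 + (e3-f3)^2" by simp
    then show ?thesis using e f by (simp add: ee ff power2_eq_square algebra_simps)
  qed
  have a'sq: "a'^2 = (1 - dot p q)/2" using a pq1 by (simp add: a'_def)
  have b'sq: "b'^2 = (1 - dot e f)/2" using b ef1 by (simp add: b'_def)
  have a1: "a^2 \<le> 1" "b^2 \<le> 1" using a(2) b(2) pq1 ef1 by auto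
  have a'0: "a' \<ge> 0" "b' \<ge> 0" using a1 by (simp_all add: a'_def b'_def)
  have sq: "sqrt ((1-a^2)*(1-b^2)) = a'*b'" using a1 by (simp add: a'_def b'_def real_sqrt_mult)
  define \<alpha> where "\<alpha> = dot m p + dot m q"
  define \<beta> where "\<beta> = dot m p - dot m q"
  define \<gamma> where "\<gamma> = dot t e + dot t f"
  define \<delta> where "\<delta> = dot t e - dot t f"
  have gen: "\<mu>^2 \<le> 4*c^2" "\<nu>^2 \<le> 4*c'^2" "\<mu>^2*c'^2 + \<nu>^2*c^2 \<le> 4*c^2*c'^2"
    if "dot n n \<le> 1" "dot x x = 1" "dot y y = 1" "c^2 = (1 + dot x y)/2" "c'^2 = (1 - dot x y)/2"
       "\<mu> = dot n x + dot n y" "\<nu> = dot n x - dot n y" for n x y c c' \<mu> \<nu>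
  proof -
    obtain n1 n2 n3 where nn: "n = R3 n1 n2 n3" by (cases n)
    obtain x1 x2 x3 where xx: "x = R3 x1 x2 x3" by (cases x)
    obtain y1 y2 y3 where yy: "y = R3 y1 y2 y3" by (cases y)
    let ?A1 = "x1+y1" and ?A2 = "x2+y2" and ?A3 = "x3+y3"
    let ?B1 = "x1-y1" and ?B2 = "x2-y2" and ?B3 = "x3-y3"
    have N: "n1^2+n2^2+n3^2 \<le> 1" using that(1) by (simp add: nn power2_eq_square)
    have NA: "?A1^2+?A2^2+?A3^2 = 4*c^2" using that(2,3,4) by (simp add: xx yy power2_eq_square algebra_simps)
    have NB: "?B1^2+?B2^2+?B3^2 = 4*c'^2" using that(2,3,5) by (simp add: xx yy power2_eq_square algebra_simps)
    have mu: "\<mu> = n1*?A1+n2*?A2+n3*?A3" using that(6) by (simp add: nn xx yy algebra_simps)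
    have nu: "\<nu> = n1*?B1+n2*?B2+n3*?B3" using that(7) by (simp add: nn xx yy algebra_simps)
    have orth: "?A1*?B1+?A2*?B2+?A3*?B3 = 0" using that(2,3) by (simp add: xx yy power2_eq_square algebra_simps)
    have c0: "c^2 \<ge> 0" "c'^2 \<ge> 0" by simp_all
    have "\<mu>^2 \<le> (n1^2+n2^2+n3^2)*(4*c^2)" unfolding mu NA[symmetric] by (rule cs3)
    also have "\<dots> \<le> 4*c^2" using N c0 mult_right_mono[of _ 1 "4*c^2"] by simp
    finally show "\<mu>^2 \<le> 4*c^2" .
    have "\<nu>^2 \<le> (n1^2+n2^2+n3^2)*(4*c'^2)" unfolding nu NB[symmetric] by (rule cs3)
    also have "\<dots> \<le> 4*c'^2" using N c0 mult_right_mono[of _ 1 "4*c'^2"] by simp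
    finally show "\<nu>^2 \<le> 4*c'^2" .
    have "\<exists>z. \<mu>^2*(4*c'^2) + \<nu>^2*(4*c^2) + z^2
       = (n1^2+n2^2+n3^2)*(4*c^2)*(4*c'^2)"
      unfolding mu nu NA[symmetric] NB[symmetric] by (rule exI, rule gram3[OF orth])
    then obtain z where G: "\<mu>^2*(4*c'^2) + \<nu>^2*(4*c^2) + z^2
       = (n1^2+n2^2+n3^2)*(4*c^2)*(4*c'^2)" by blast
    have "(n1^2+n2^2+n3^2)*(4*c^2)*(4*c'^2) \<le> 1*(4*c^2)*(4*c'^2)"
      using N c0 by (intro mult_right_mono) auto
    then have "\<mu>^2*(4*c'^2) + \<nu>^2*(4*c^2) \<le> 16*c^2*c'^2"
      using G zero_le_power2[of z] by linarith
    then show "\<mu>^2*c'^2 + \<nu>^2*c^2 \<le> 4*c^2*c'^2" by simp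
  qed
  have h1: "\<alpha>^2 \<le> 4*a^2" "\<beta>^2 \<le> 4*a'^2" "\<alpha>^2*a'^2 + \<beta>^2*a^2 \<le> 4*a^2*a'^2"
    using gen[OF m p q a(2) a'sq] \<alpha>_def \<beta>_def by auto
  have h2: "\<gamma>^2 \<le> 4*b^2" "\<delta>^2 \<le> 4*b'^2" "\<gamma>^2*b'^2 + \<delta>^2*b^2 \<le> 4*b^2*b'^2"
    using gen[OF t e f b(2) b'sq] \<gamma>_def \<delta>_def by auto
  have aa: "a^2 + a'^2 = 1" using a a'sq by simp
  have bb: "b^2 + b'^2 = 1" using b b'sq by simp
  have K: "\<alpha>*\<gamma> + \<beta>*\<delta> \<le> 4 * max (a*b) (a'*b')"
    by (rule key_real[OF a(1) a'0(1) aa b(1) a'0(2) bb h1 h2])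
  have "dot m p * dot t e + dot m q * dot t f = (\<alpha>*\<gamma> + \<beta>*\<delta>)/2"
    by (simp add: \<alpha>_def \<beta>_def \<gamma>_def \<delta>_def algebra_simps)
  then show ?thesis using K sq by simp
qed


definition bl :: "complex \<Rightarrow> complex \<Rightarrow> r3" where
  "bl x y = R3 (2*Re(cnj x * y)) (2*Im(cnj x * y)) ((cmod x)^2 - (cmod y)^2)"

definition mb :: "complex \<Rightarrow> complex \<Rightarrow> complex \<Rightarrow> r3" where
  "mb w00 w01 w11 = R3 (2*Re w01) (-2*Im w01) (Re w00 - Re w11)"

lemma bl_inner:
  fixes x1 x2 y1 y2 :: complex
  shows
  "(cmod (cnj x1 * y1 + cnj x2 * y2))^2 = ((cmod x1^2 + cmod x2^2)*(cmod y1^2+cmod y2^2) + dot (bl x1 x2) (bl y1 y2))/2"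
  unfolding bl_def cmod_power2 by (simp add: algebra_simps power2_eq_square)

lemma bl_unit: fixes x y :: complex shows "dot (bl x y) (bl x y) = (cmod x^2 + cmod y^2)^2"
  unfolding bl_def cmod_power2 by (simp add: algebra_simps power2_eq_square)

lemma psd22:
  fixes w00 w01 w10 w11 :: complex
  assumes "\<And>x y. Im (cnj x*w00*x + cnj x*w01*y + cnj y*w10*x + cnj y*w11*y) = 0
                \<and> Re (cnj x*w00*x + cnj x*w01*y + cnj y*w10*x + cnj y*w11*y) \<ge> 0"
  shows "Im w00 = 0" "Im w11 = 0" "Re w00 \<ge> 0" "Re w11 \<ge> 0" "w10 = cnj w01"
    "cmod w01 ^2 \<le> Re w00 * Re w11"
proof -
  let ?q = "\<lambda>x y. cnj x*w00*x + cnj x*w01*y + cnj y*w10*x + cnj y*w11*y"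
  have A: "Im (?q 1 0) = 0" "Re (?q 1 0) \<ge> 0" using assms by blast+
  then show i0: "Im w00 = 0" "Re w00 \<ge> 0" by simp_all
  have B: "Im (?q 0 1) = 0" "Re (?q 0 1) \<ge> 0" using assms by blast+
  then show i1: "Im w11 = 0" "Re w11 \<ge> 0" by simp_all
  have C: "Im (?q 1 1) = 0" using assms by blast
  have D: "Im (?q 1 \<i>) = 0" using assms by blast
  from C D i0 i1 have "Im w01 + Im w10 = 0" "Re w01 - Re w10 = 0" by (simp_all add: algebra_simps)
  then show h: "w10 = cnj w01" by (simp add: complex_eq_iff)
  show "cmod w01 ^2 \<le> Re w00 * Re w11"
  proof (cases "Re w00 > 0")
    case True
    have "Re (?q (-w01) (of_real (Re w00))) \<ge> 0" using assms by blast
    then have "Re w00 * (Re w00 * Re w11 - cmod w01^2) \<ge> 0"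
      using i0 i1 h unfolding cmod_power2 by (simp add: algebra_simps power2_eq_square)
    then show ?thesis using True by (simp add: zero_le_mult_iff)
  next
    case F: False
    show ?thesis
    proof (cases "Re w11 > 0")
      case True
      have "Re (?q (of_real (Re w11)) (-w10)) \<ge> 0" using assms by blast
      then have "Re w11 * (Re w00 * Re w11 - cmod w01^2) \<ge> 0"
        using i0 i1 h unfolding cmod_power2 by (simp add: algebra_simps power2_eq_square)
      then show ?thesis using True by (simp add: zero_le_mult_iff)
    next
      case False
      have "Re (?q 1 (-w10)) \<ge> 0" using assms by blast
      then have "- 2 * cmod w01^2 \<ge> 0"
        using i0 i1 h F False unfolding cmod_power2 by (simp add: algebra_simps power2_eq_square)
      then show ?thesis using F False i0 i1 by simp
    qed
  qed
qed

lemma density_bloch: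
  fixes w00 w01 w10 w11 :: complex
  assumes "\<And>x y. Im (cnj x*w00*x + cnj x*w01*y + cnj y*w10*x + cnj y*w11*y) = 0
                \<and> Re (cnj x*w00*x + cnj x*w01*y + cnj y*w10*x + cnj y*w11*y) \<ge> 0"
    and tr: "w00 + w11 = 1"
  shows "dot (mb w00 w01 w11) (mb w00 w01 w11) \<le> 1"
    "\<And>x y. Re (cnj x*w00*x + cnj x*w01*y + cnj y*w10*x + cnj y*w11*y)
         = (cmod x^2 + cmod y^2 + dot (mb w00 w01 w11) (bl x y))/2"
proof -
  note P = psd22[OF assms(1)]
  have t: "Re w00 + Re w11 = 1" using tr by (metis one_complex.simps(1) plus_complex.simps(1))
  have "dot (mb w00 w01 w11) (mb w00 w01 w11) = (Re w00 + Re w11)^2 - 4*(Re w00 * Re w11 - cmod w01^2)"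
    unfolding mb_def cmod_power2 by (simp add: algebra_simps power2_eq_square)
  then show "dot (mb w00 w01 w11) (mb w00 w01 w11) \<le> 1" using t P(6) by simp
  fix x y
  have w11: "Re w11 = 1 - Re w00" using t by simp
  show "Re (cnj x*w00*x + cnj x*w01*y + cnj y*w10*x + cnj y*w11*y)
         = (cmod x^2 + cmod y^2 + dot (mb w00 w01 w11) (bl x y))/2"
    unfolding mb_def bl_def cmod_power2 P(5) using P(1,2) t
    apply (simp add: algebra_simps power2_eq_square)
    by algebra
qed


definition idx :: "nat \<Rightarrow> 2" where "idx a = (if a = 0 then 1 else 2)"

definition nsw :: "(nat \<Rightarrow> nat \<Rightarrow> complex) \<Rightarrow> (nat \<Rightarrow> complex) \<Rightarrow> complex" where
  "nsw S v = (\<Sum>a<2. \<Sum>b<2. cnj (v a) * S a b * v b)"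

lemma sum_lt2: "(\<Sum>a<(2::nat). f a) = f 0 + f 1"
  by (simp add: numeral_2_eq_2)

lemma nsw_expand: "nsw S v = cnj (v 0) * S 0 0 * v 0 + cnj (v 0) * S 0 1 * v 1 + cnj (v 1) * S 1 0 * v 0 + cnj (v 1) * S 1 1 * v 1"
  by (simp add: nsw_def sum_lt2)

lemma sandwich_expand: "sandwich x A = cnj (x$1) * A$1$1 * x$1 + cnj (x$1) * A$1$2 * x$2 + cnj (x$2) * A$2$1 * x$1 + cnj (x$2) * A$2$2 * x$2"
  by (simp add: sandwich_def sum_2)

lemma braket_expand: "braket x y = cnj (x$1) * y$1 + cnj (x$2) * y$2"
  by (simp add: braket_def sum_2)

lemma ctrace_expand: "ctrace A = A$1$1 + A$2$2"
  by (simp add: ctrace_def sum_2)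

lemma norm2_sq: "(norm (x::complex^2))^2 = cmod (x$1)^2 + cmod (x$2)^2"
  by (simp add: norm_vec_def L2_set_def sum_2)

lemma ndensity_form:
  assumes "ndensity 2 S"
  shows "\<And>x y. Im (cnj x * S 0 0 * x + cnj x * S 0 1 * y + cnj y * S 1 0 * x + cnj y * S 1 1 * y) = 0
                \<and> Re (cnj x * S 0 0 * x + cnj x * S 0 1 * y + cnj y * S 1 0 * x + cnj y * S 1 1 * y) \<ge> 0"
    "S 0 0 + S 1 1 = 1"
proof -
  fix x y :: complex
  have H: "\<forall>v. Im (nsw S v) = 0 \<and> Re (nsw S v) \<ge> 0"
    using assms unfolding ndensity_def nsw_def Let_def by blast
  have "Im (nsw S (\<lambda>a. if a = 0 then x else y)) = 0 \<and> Re (nsw S (\<lambda>a. if a = 0 then x else y)) \<ge> 0"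
    using H by blast
  then show "Im (cnj x * S 0 0 * x + cnj x * S 0 1 * y + cnj y * S 1 0 * x + cnj y * S 1 1 * y) = 0
                \<and> Re (cnj x * S 0 0 * x + cnj x * S 0 1 * y + cnj y * S 1 0 * x + cnj y * S 1 1 * y) \<ge> 0"
    by (simp add: nsw_expand)
next
  show "S 0 0 + S 1 1 = 1" using assms by (simp add: ndensity_def sum_lt2)
qed

lemma density2_form:
  assumes "density2 A"
  shows "\<And>x y. Im (cnj x * A$1$1 * x + cnj x * A$1$2 * y + cnj y * A$2$1 * x + cnj y * A$2$2 * y) = 0
                \<and> Re (cnj x * A$1$1 * x + cnj x * A$1$2 * y + cnj y * A$2$1 * x + cnj y * A$2$2 * y) \<ge> 0"
    "A$1$1 + A$2$2 = 1"
proof -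
  fix x y :: complex
  have "Im (sandwich (vector [x,y]) A) = 0 \<and> Re (sandwich (vector [x,y]) A) \<ge> 0"
    using assms unfolding density2_def psd2_def by blast
  then show "Im (cnj x * A$1$1 * x + cnj x * A$1$2 * y + cnj y * A$2$1 * x + cnj y * A$2$2 * y) = 0
                \<and> Re (cnj x * A$1$1 * x + cnj x * A$1$2 * y + cnj y * A$2$1 * x + cnj y * A$2$2 * y) \<ge> 0"
    by (simp add: sandwich_expand)
next
  show "A$1$1 + A$2$2 = 1" using assms by (simp add: density2_def ctrace_expand)
qed

lemma bl_braket:
  "(cmod (braket x y))^2 = ((cmod (x$1)^2 + cmod (x$2)^2)*(cmod (y$1)^2+cmod (y$2)^2) + dot (bl (x$1) (x$2)) (bl (y$1) (y$2)))/2"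
  by (simp add: braket_expand bl_inner)

lemma bl_braket_cnj:
  "(cmod (braket x y))^2 = ((cmod (x$1)^2 + cmod (x$2)^2)*(cmod (y$1)^2+cmod (y$2)^2) + dot (bl (cnj (x$1)) (cnj (x$2))) (bl (cnj (y$1)) (cnj (y$2))))/2"
proof -
  have "cmod (braket x y) = cmod (cnj (cnj (x$1)) * cnj (y$1) + cnj (cnj (x$2)) * cnj (y$2))"
    by (metis braket_expand complex_cnj_add complex_cnj_mult complex_mod_cnj)
  then show ?thesis using bl_inner[of "cnj (x$1)" "cnj (y$1)" "cnj (x$2)" "cnj (y$2)"] by simp
qed

lemma perk:
  assumes S: "ndensity 2 S" and T: "density2 \<tau>"
    and n: "norm \<psi> = 1" "norm \<phi> = 1" "norm e = 1" "norm f = 1"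
  shows "(2*Re (nsw S (\<lambda>a. cnj (\<psi>$idx a))) - 1)*(2*Re (sandwich e \<tau>) - 1)
       + (2*Re (nsw S (\<lambda>a. cnj (\<phi>$idx a))) - 1)*(2*Re (sandwich f \<tau>) - 1)
     \<le> 2 * max (cmod (braket \<psi> \<phi>) * cmod (braket e f))
                (sqrt ((1 - (cmod (braket \<psi> \<phi>))^2) * (1 - (cmod (braket e f))^2)))"
proof -
  note DS = density_bloch[OF ndensity_form[OF S]]
  note DT = density_bloch[OF density2_form[OF T]]
  let ?m = "mb (S 0 0) (S 0 1) (S 1 1)"
  let ?t = "mb (\<tau>$1$1) (\<tau>$1$2) (\<tau>$2$2)"
  let ?P = "bl (cnj (\<psi>$1)) (cnj (\<psi>$2))"
  let ?Q = "bl (cnj (\<phi>$1)) (cnj (\<phi>$2))"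
  let ?E = "bl (e$1) (e$2)"
  let ?F = "bl (f$1) (f$2)"
  have u: "cmod (\<psi>$1)^2 + cmod (\<psi>$2)^2 = 1" "cmod (\<phi>$1)^2 + cmod (\<phi>$2)^2 = 1"
     "cmod (e$1)^2 + cmod (e$2)^2 = 1" "cmod (f$1)^2 + cmod (f$2)^2 = 1"
    using n by (simp_all flip: norm2_sq)
  have i1: "2*Re (nsw S (\<lambda>a. cnj (\<psi>$idx a))) - 1 = dot ?m ?P"
    using DS(2)[of "cnj (\<psi>$1)" "cnj (\<psi>$2)"] u by (simp add: nsw_expand idx_def)
  have i2: "2*Re (nsw S (\<lambda>a. cnj (\<phi>$idx a))) - 1 = dot ?m ?Q"
    using DS(2)[of "cnj (\<phi>$1)" "cnj (\<phi>$2)"] u by (simp add: nsw_expand idx_def)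
  have i3: "2*Re (sandwich e \<tau>) - 1 = dot ?t ?E"
    using DT(2)[of "e$1" "e$2"] u by (simp add: sandwich_expand)
  have i4: "2*Re (sandwich f \<tau>) - 1 = dot ?t ?F"
    using DT(2)[of "f$1" "f$2"] u by (simp add: sandwich_expand)
  have "dot ?m ?P * dot ?t ?E + dot ?m ?Q * dot ?t ?F \<le> 2 * max (cmod (braket \<psi> \<phi>) * cmod (braket e f))
                (sqrt ((1 - (cmod (braket \<psi> \<phi>))^2) * (1 - (cmod (braket e f))^2)))"
  proof (rule bloch_bound[OF DS(1) DT(1)])
    show "dot ?P ?P = 1" "dot ?Q ?Q = 1" "dot ?E ?E = 1" "dot ?F ?F = 1"
      using u by (simp_all add: bl_unit)
    show "cmod (braket \<psi> \<phi>) \<ge> 0" "cmod (braket e f) \<ge> 0" by simp_all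
    show "(cmod (braket \<psi> \<phi>))^2 = (1 + dot ?P ?Q)/2"
      using bl_braket_cnj[of \<psi> \<phi>] u by simp
    show "(cmod (braket e f))^2 = (1 + dot ?E ?F)/2"
      using bl_braket[of e f] u by simp
  qed
  then show ?thesis using i1 i2 i3 i4 by simp
qed


definition rho0 :: "nat \<Rightarrow> nat \<Rightarrow> cmat2" where
  "rho0 a b = (\<chi> i j. if i = idx a \<and> j = idx b then 1/2 else 0)"

lemma cscale_zero: "cscale 0 A = 0"
  by (simp add: cscale_def vec_eq_iff)

lemma clinear2_zero: "clinear2 \<Psi> \<Longrightarrow> \<Psi> 0 = 0"
  unfolding clinear2_def by (metis cscale_zero)

lemma clinear2_sum: "clinear2 \<Psi> \<Longrightarrow> \<Psi> (\<Sum>k\<in>K. A k) = (\<Sum>k\<in>K. \<Psi> (A k))"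
proof (induction K rule: infinite_finite_induct)
  case (infinite A) then show ?case by (simp add: clinear2_zero)
next
  case empty then show ?case by (simp add: clinear2_zero)
next
  case (insert x F) then show ?case by (simp add: clinear2_def)
qed

lemma cnj_mult_self: "cnj z * z = complex_of_real ((cmod z)^2)"
  by (metis complex_norm_square mult.commute of_real_power)

lemma rho0_density: "block_density 2 rho0"
  unfolding block_density_def block_psd_def Let_def
proof (intro conjI allI)
  fix v :: "nat \<Rightarrow> cvec2"
  let ?z = "v 0 $ 1 + v 1 $ 2"
  have "(\<Sum>a<2. \<Sum>b<2. \<Sum>i\<in>UNIV. \<Sum>j\<in>UNIV. cnj (v a $ i) * (rho0 a b $ i $ j) * (v b $ j))
      = cnj ?z * ?z / 2"
    by (simp add: sum_lt2 sum_2 rho0_def idx_def algebra_simps add_divide_distrib)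
  also have "\<dots> = complex_of_real ((cmod ?z)^2 / 2)" by (subst cnj_mult_self) simp
  finally have E: "(\<Sum>a<2. \<Sum>b<2. \<Sum>i\<in>UNIV. \<Sum>j\<in>UNIV. cnj (v a $ i) * (rho0 a b $ i $ j) * (v b $ j))
      = complex_of_real ((cmod ?z)^2 / 2)" .
  show "Im (\<Sum>a<2. \<Sum>b<2. \<Sum>i\<in>UNIV. \<Sum>j\<in>UNIV. cnj (v a $ i) * (rho0 a b $ i $ j) * (v b $ j)) = 0"
    unfolding E by simp
  show "0 \<le> Re (\<Sum>a<2. \<Sum>b<2. \<Sum>i\<in>UNIV. \<Sum>j\<in>UNIV. cnj (v a $ i) * (rho0 a b $ i $ j) * (v b $ j))"
    unfolding E by simp
next
  show "(\<Sum>a<2. ctrace (rho0 a a)) = 1"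
    by (simp add: sum_lt2 ctrace_expand rho0_def idx_def)
qed

lemma expand_rho0: "X = (\<Sum>a<2. \<Sum>b<2. cscale (2 * X$idx a$idx b) (rho0 a b))"
  by (simp add: vec_eq_iff forall_2 sum_lt2 rho0_def idx_def cscale_def)

lemma channel_decomp:
  assumes "\<Psi> \<in> UE"
  obtains m :: nat and p S \<tau> where "\<forall>k<m. 0 \<le> p k \<and> ndensity 2 (S k) \<and> density2 (\<tau> k)"
    "(\<Sum>k<m. p k) = 1"
    "\<And>X. \<Psi> X = (\<Sum>k<m. cscale (complex_of_real (p k) * (\<Sum>a<2. \<Sum>b<2. 2 * X$idx a$idx b * S k a b)) (\<tau> k))"
proof -
  have lin: "clinear2 \<Psi>" and eb: "entanglement_breaking2 \<Psi>"
    using assms by (auto simp: UE_def quantum_channel2_def)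
  have "separable22 (\<lambda>a b. \<Psi> (rho0 a b))"
    using eb rho0_density unfolding entanglement_breaking2_def by blast
  then obtain m :: nat and p S \<tau> where h: "\<forall>k<m. 0 \<le> p k \<and> ndensity 2 (S k) \<and> density2 (\<tau> k)"
    "(\<Sum>k<m. p k) = 1"
    "\<forall>a<2. \<forall>b<2. \<Psi> (rho0 a b) = (\<Sum>k<m. cscale (complex_of_real (p k) * S k a b) (\<tau> k))"
    unfolding separable22_def by blast
  have "\<Psi> X = (\<Sum>k<m. cscale (complex_of_real (p k) * (\<Sum>a<2. \<Sum>b<2. 2 * X$idx a$idx b * S k a b)) (\<tau> k))" for X
  proof -
    have "\<Psi> X = (\<Sum>a<2. \<Sum>b<2. cscale (2 * X$idx a$idx b) (\<Psi> (rho0 a b)))"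
      apply (subst expand_rho0[of X])
      using lin by (simp add: clinear2_sum clinear2_def)
    also have "\<dots> = (\<Sum>a<2. \<Sum>b<2. cscale (2 * X$idx a$idx b) (\<Sum>k<m. cscale (complex_of_real (p k) * S k a b) (\<tau> k)))"
      using h(3) by (simp add: sum_lt2)
    also have "\<dots> = (\<Sum>k<m. cscale (complex_of_real (p k) * (\<Sum>a<2. \<Sum>b<2. 2 * X$idx a$idx b * S k a b)) (\<tau> k))"
      by (simp add: vec_eq_iff cscale_def sum_component sum_distrib_left sum_distrib_right sum_lt2 sum.distrib algebra_simps)
    finally show ?thesis .
  qed
  then show ?thesis using that h(1,2) by blast
qed


lemma sandwich_add: "sandwich x (A + B) = sandwich x A + sandwich x B"
  by (simp add: sandwich_expand algebra_simps)
lemma sandwich_zero: "sandwich x 0 = 0"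
  by (simp add: sandwich_expand)
lemma sandwich_cscale: "sandwich x (cscale c A) = c * sandwich x A"
  by (simp add: sandwich_expand cscale_def algebra_simps)
lemma sandwich_sum: "sandwich x (\<Sum>k\<in>K. A k) = (\<Sum>k\<in>K. sandwich x (A k))"
  by (induction K rule: infinite_finite_induct) (simp_all add: sandwich_zero sandwich_add)
lemma ctrace_add: "ctrace (A + B) = ctrace A + ctrace B"
  by (simp add: ctrace_expand)
lemma ctrace_zero: "ctrace 0 = 0"
  by (simp add: ctrace_expand)
lemma ctrace_cscale: "ctrace (cscale c A) = c * ctrace A"
  by (simp add: ctrace_expand cscale_def algebra_simps)
lemma ctrace_sum: "ctrace (\<Sum>k\<in>K. A k) = (\<Sum>k\<in>K. ctrace (A k))"
  by (induction K rule: infinite_finite_induct) (simp_all add: ctrace_zero ctrace_add)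

lemma coef_ketbra: "(\<Sum>a<2. \<Sum>b<2. 2 * (ketbra x x)$idx a$idx b * S a b) = 2 * nsw S (\<lambda>a. cnj (x$idx a))"
  by (simp add: sum_lt2 ketbra_def nsw_expand idx_def algebra_simps)

lemma coef_one: "(\<Sum>a<2. \<Sum>b<2. 2 * (mat 1 :: cmat2)$idx a$idx b * S a b) = 2 * (S 0 0 + S 1 1)"
  by (simp add: sum_lt2 mat_def idx_def algebra_simps)

lemma ctrace_ketbra: "ctrace (ketbra x x) = complex_of_real ((norm x)^2)"
  by (simp add: ctrace_expand ketbra_def norm2_sq complex_norm_square[symmetric])

lemma sandwich_one: "sandwich x (mat 1) = complex_of_real ((norm x)^2)"
  by (simp add: sandwich_expand mat_def norm2_sq complex_norm_square[symmetric] mult.commute)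

lemma avg_bound:
  fixes p \<sigma> \<eta> \<sigma>' \<eta>' :: "nat \<Rightarrow> real"
  assumes "finite K" "\<forall>k\<in>K. p k \<ge> 0" "(\<Sum>k\<in>K. p k) = 1"
    "(\<Sum>k\<in>K. p k * (2*\<sigma> k)) = 1" "(\<Sum>k\<in>K. p k * (2*\<eta> k)) = 1"
    "(\<Sum>k\<in>K. p k * (2*\<sigma>' k)) = 1" "(\<Sum>k\<in>K. p k * (2*\<eta>' k)) = 1"
    "\<forall>k\<in>K. (2*\<sigma> k - 1)*(2*\<eta> k - 1) + (2*\<sigma>' k - 1)*(2*\<eta>' k - 1) \<le> 2*M"
  shows "(\<Sum>k\<in>K. p k * (2*\<sigma> k) * \<eta> k)/2 + (\<Sum>k\<in>K. p k * (2*\<sigma>' k) * \<eta>' k)/2 \<le> (1 + M)/2"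
proof -
  have "(\<Sum>k\<in>K. p k * ((2*\<sigma> k - 1)*(2*\<eta> k - 1) + (2*\<sigma>' k - 1)*(2*\<eta>' k - 1))) \<le> (\<Sum>k\<in>K. p k * (2*M))"
    using assms(2,8) by (intro sum_mono mult_left_mono) auto
  also have "\<dots> = 2*M" using assms(3) by (simp add: sum_distrib_right[symmetric])
  finally have I: "(\<Sum>k\<in>K. p k * ((2*\<sigma> k - 1)*(2*\<eta> k - 1) + (2*\<sigma>' k - 1)*(2*\<eta>' k - 1))) \<le> 2*M" .
  define A where "A = (\<lambda>k. p k * (2*\<sigma> k) * \<eta> k)"
  define B where "B = (\<lambda>k. p k * (2*\<sigma>' k) * \<eta>' k)"
  define C1 where "C1 = (\<lambda>k. p k * (2*\<sigma> k))"
  define C2 where "C2 = (\<lambda>k. p k * (2*\<eta> k))"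
  define C3 where "C3 = (\<lambda>k. p k * (2*\<sigma>' k))"
  define C4 where "C4 = (\<lambda>k. p k * (2*\<eta>' k))"
  have "(\<Sum>k\<in>K. p k * ((2*\<sigma> k - 1)*(2*\<eta> k - 1) + (2*\<sigma>' k - 1)*(2*\<eta>' k - 1)))
     = (\<Sum>k\<in>K. 2*A k + 2*B k - C1 k - C2 k - C3 k - C4 k + 2 * p k)"
    by (rule sum.cong) (simp_all add: A_def B_def C1_def C2_def C3_def C4_def algebra_simps)
  also have "\<dots> = 2*(\<Sum>k\<in>K. A k) + 2*(\<Sum>k\<in>K. B k) - 2"
    using assms(3-7) unfolding C1_def[symmetric] C2_def[symmetric] C3_def[symmetric] C4_def[symmetric]
    by (simp add: sum.distrib sum_subtractf sum_distrib_left[symmetric])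
  finally have "(\<Sum>k\<in>K. p k * ((2*\<sigma> k - 1)*(2*\<eta> k - 1) + (2*\<sigma>' k - 1)*(2*\<eta>' k - 1)))
     = 2*(\<Sum>k\<in>K. A k) + 2*(\<Sum>k\<in>K. B k) - 2" .
  then have "(\<Sum>k\<in>K. A k) + (\<Sum>k\<in>K. B k) \<le> 1 + M" using I by simp
  then show ?thesis unfolding A_def B_def by simp
qed


lemma helper_ab: "a + b = 1 \<Longrightarrow> p*(2*(r*a)) + p*(2*(r*b)) = p*(2*(r::real))"
proof -
  assume "a + b = 1"
  have "p*(2*(r*a)) + p*(2*(r*b)) = p*(2*(r*(a+b)))" by (simp add: algebra_simps)
  then show ?thesis using \<open>a + b = 1\<close> by simp
qed

lemma upper:
  assumes UE: "\<Psi> \<in> UE" and n: "norm \<psi> = 1" "norm \<phi> = 1" "norm e = 1" "norm f = 1"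
  shows "Re (sandwich e (\<Psi> (ketbra \<psi> \<psi>))) / 2 + Re (sandwich f (\<Psi> (ketbra \<phi> \<phi>))) / 2
     \<le> (1 + max (cmod (braket \<psi> \<phi>) * cmod (braket e f))
                    (sqrt ((1 - (cmod (braket \<psi> \<phi>))\<^sup>2) * (1 - (cmod (braket e f))\<^sup>2)))) / 2"
proof -
  let ?M = "max (cmod (braket \<psi> \<phi>) * cmod (braket e f))
                    (sqrt ((1 - (cmod (braket \<psi> \<phi>))\<^sup>2) * (1 - (cmod (braket e f))\<^sup>2)))"
  have tp: "trace_preserving2 \<Psi>" and un: "unital2 \<Psi>"
    using UE by (auto simp: UE_def quantum_channel2_def)
  obtain m :: nat and p S \<tau> where h: "\<forall>k<m. 0 \<le> p k \<and> ndensity 2 (S k) \<and> density2 (\<tau> k)"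
    "(\<Sum>k<m. p k) = 1"
    "\<And>X. \<Psi> X = (\<Sum>k<m. cscale (complex_of_real (p k) * (\<Sum>a<2. \<Sum>b<2. 2 * X$idx a$idx b * S k a b)) (\<tau> k))"
    using channel_decomp[OF UE] by blast
  have imS: "Im (nsw (S k) v) = 0" if "k < m" for k v
    using h(1) that unfolding ndensity_def nsw_def Let_def by blast
  have imT: "Im (sandwich x (\<tau> k)) = 0" "ctrace (\<tau> k) = 1" if "k < m" for k x
    using h(1) that unfolding density2_def psd2_def by blast+
  have trS: "S k 0 0 + S k 1 1 = 1" if "k < m" for k
    using h(1) that ndensity_form(2) by blast
  have trS': "Re (S k 0 0) + Re (S k (Suc 0) (Suc 0)) = 1" if "k < m" for k
    using arg_cong[OF trS[OF that], of Re] by simp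
  have SW: "sandwich x (\<Psi> (ketbra y y)) = (\<Sum>k<m. complex_of_real (p k) * (2 * nsw (S k) (\<lambda>a. cnj (y$idx a))) * sandwich x (\<tau> k))" for x y
    by (simp add: h(3) sandwich_sum sandwich_cscale coef_ketbra)
  have TR: "ctrace (\<Psi> (ketbra y y)) = (\<Sum>k<m. complex_of_real (p k) * (2 * nsw (S k) (\<lambda>a. cnj (y$idx a))) * ctrace (\<tau> k))" for y
    by (simp add: h(3) ctrace_sum ctrace_cscale coef_ketbra)
  have UN: "sandwich x (\<Psi> (mat 1)) = (\<Sum>k<m. complex_of_real (p k) * (2 * (S k 0 0 + S k 1 1)) * sandwich x (\<tau> k))" for x
    by (simp add: h(3) sandwich_sum sandwich_cscale coef_one)
  have fid: "Re (sandwich x (\<Psi> (ketbra y y))) = (\<Sum>k<m. p k * (2 * Re (nsw (S k) (\<lambda>a. cnj (y$idx a)))) * Re (sandwich x (\<tau> k)))" for x y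
    unfolding SW Re_sum by (rule sum.cong) (simp_all add: imS imT)
  have sig: "(\<Sum>k<m. p k * (2 * Re (nsw (S k) (\<lambda>a. cnj (y$idx a))))) = 1" if "norm y = 1" for y
  proof -
    have "ctrace (\<Psi> (ketbra y y)) = 1" using tp that by (simp add: trace_preserving2_def ctrace_ketbra)
    then have "Re (ctrace (\<Psi> (ketbra y y))) = 1" by simp
    moreover have "Re (ctrace (\<Psi> (ketbra y y))) = (\<Sum>k<m. p k * (2 * Re (nsw (S k) (\<lambda>a. cnj (y$idx a)))))"
      unfolding TR Re_sum by (rule sum.cong) (simp_all add: imS imT)
    ultimately show ?thesis by simp
  qed
  have eta: "(\<Sum>k<m. p k * (2 * Re (sandwich x (\<tau> k)))) = 1" if "norm x = 1" for x
  proof -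
    have "sandwich x (\<Psi> (mat 1)) = 1" using un that by (simp add: unital2_def sandwich_one)
    then have "Re (sandwich x (\<Psi> (mat 1))) = 1" by simp
    moreover have "Re (sandwich x (\<Psi> (mat 1))) = (\<Sum>k<m. p k * (2 * Re (sandwich x (\<tau> k))))"
      unfolding UN Re_sum apply (rule sum.cong, simp)
      subgoal for k using imT(1)[of k x] trS'[of k] by (simp add: helper_ab)
      done
    ultimately show ?thesis by simp
  qed
  have "(\<Sum>k<m. p k * (2 * Re (nsw (S k) (\<lambda>a. cnj (\<psi>$idx a)))) * Re (sandwich e (\<tau> k)))/2
      + (\<Sum>k<m. p k * (2 * Re (nsw (S k) (\<lambda>a. cnj (\<phi>$idx a)))) * Re (sandwich f (\<tau> k)))/2 \<le> (1 + ?M)/2"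
  proof (rule avg_bound)
    show "\<forall>k\<in>{..<m}. (2 * Re (nsw (S k) (\<lambda>a. cnj (\<psi>$idx a))) - 1) * (2 * Re (sandwich e (\<tau> k)) - 1)
        + (2 * Re (nsw (S k) (\<lambda>a. cnj (\<phi>$idx a))) - 1) * (2 * Re (sandwich f (\<tau> k)) - 1) \<le> 2 * ?M"
      using h(1) perk n by blast
  qed (use h(1,2) sig eta n in auto)
  then show ?thesis unfolding fid .
qed


lemma unit_dot_neg1:
  assumes "dot p p = 1" "dot q q = 1" "dot p q = -1"
  shows "q = R3 (- (case p of R3 x y z \<Rightarrow> x)) (- (case p of R3 x y z \<Rightarrow> y)) (- (case p of R3 x y z \<Rightarrow> z))"
proof -
  obtain p1 p2 p3 where pp: "p = R3 p1 p2 p3" by (cases p)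
  obtain q1 q2 q3 where qq: "q = R3 q1 q2 q3" by (cases q)
  have "(p1+q1)^2 + (p2+q2)^2 + (p3+q3)^2 = 0"
    using assms by (simp add: pp qq power2_eq_square algebra_simps)
  then have "p1+q1 = 0" "p2+q2 = 0" "p3+q3 = 0" by (simp_all add: sum_squares_eq_zero_iff add_nonneg_eq_0_iff)
  then show ?thesis by (simp add: pp qq)
qed

lemma unit_dot_1:
  assumes "dot p p = 1" "dot q q = 1" "dot p q = 1"
  shows "q = p"
proof -
  obtain p1 p2 p3 where pp: "p = R3 p1 p2 p3" by (cases p)
  obtain q1 q2 q3 where qq: "q = R3 q1 q2 q3" by (cases q)
  have "(p1-q1)^2 + (p2-q2)^2 + (p3-q3)^2 = 0"
    using assms by (simp add: pp qq power2_eq_square algebra_simps)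
  then have "p1-q1 = 0" "p2-q2 = 0" "p3-q3 = 0" by (simp_all add: sum_squares_eq_zero_iff add_nonneg_eq_0_iff)
  then show ?thesis by (simp add: pp qq)
qed

lemma choose_dirs:
  assumes p: "dot p p = 1" and q: "dot q q = 1" and E: "dot E E = 1" and F: "dot F F = 1"
    and a: "a \<ge> 0" "a^2 = (1 + dot p q)/2" and b: "b \<ge> 0" "b^2 = (1 + dot E F)/2"
  shows "\<exists>u v. dot u u = 1 \<and> dot v v = 1 \<and>
     dot u p * dot v E + dot u q * dot v F = 2 * max (a*b) (sqrt ((1-a^2)*(1-b^2)))"
proof -
  obtain p1 p2 p3 where pp: "p = R3 p1 p2 p3" by (cases p)
  obtain q1 q2 q3 where qq: "q = R3 q1 q2 q3" by (cases q)
  obtain e1 e2 e3 where ee: "E = R3 e1 e2 e3" by (cases E)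
  obtain f1 f2 f3 where ff: "F = R3 f1 f2 f3" by (cases F)
  have pq1: "dot p q \<le> 1"
  proof -
    have "0 \<le> (p1-q1)^2 + (p2-q2)^2 + (p3-q3)^2" by simp
    then show ?thesis using p q by (simp add: pp qq power2_eq_square algebra_simps)
  qed
  have ef1: "dot E F \<le> 1"
  proof -
    have "0 \<le> (e1-f1)^2 + (e2-f2)^2 + (e3-f3)^2" by simp
    then show ?thesis using E F by (simp add: ee ff power2_eq_square algebra_simps)
  qed
  have pq2: "dot p q \<ge> -1"
  proof -
    have "0 \<le> (p1+q1)^2 + (p2+q2)^2 + (p3+q3)^2" by simp
    then show ?thesis using p q by (simp add: pp qq power2_eq_square algebra_simps)
  qed
  have ef2: "dot E F \<ge> -1"
  proof -
    have "0 \<le> (e1+f1)^2 + (e2+f2)^2 + (e3+f3)^2" by simp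
    then show ?thesis using E F by (simp add: ee ff power2_eq_square algebra_simps)
  qed
  define a' where "a' = sqrt (1 - a^2)"
  define b' where "b' = sqrt (1 - b^2)"
  have a1: "a^2 \<le> 1" "b^2 \<le> 1" using a(2) b(2) pq1 ef1 by auto
  have a'sq: "a'^2 = (1 - dot p q)/2" using a a1 by (simp add: a'_def)
  have b'sq: "b'^2 = (1 - dot E F)/2" using b a1 by (simp add: b'_def)
  have a'0: "a' \<ge> 0" "b' \<ge> 0" using a1 by (simp_all add: a'_def b'_def)
  have sq: "sqrt ((1-a^2)*(1-b^2)) = a'*b'" using a1 by (simp add: a'_def b'_def real_sqrt_mult)
  show ?thesis
  proof (cases "a*b \<ge> a'*b'")
    case True
    then have M: "max (a*b) (sqrt ((1-a^2)*(1-b^2))) = a*b" using sq by simp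
    show ?thesis
    proof (cases "a > 0 \<and> b > 0")
      case True
      define u where "u = R3 ((p1+q1)/(2*a)) ((p2+q2)/(2*a)) ((p3+q3)/(2*a))"
      define v where "v = R3 ((e1+f1)/(2*b)) ((e2+f2)/(2*b)) ((e3+f3)/(2*b))"
      have uu: "dot u u = ((p1+q1)^2 + (p2+q2)^2 + (p3+q3)^2)/(4*a^2)"
        using True by (simp add: u_def power2_eq_square field_simps)
      also have "\<dots> = 1" using True p q a(2) by (simp add: pp qq power2_eq_square field_simps; simp add: algebra_simps)
      finally have u1: "dot u u = 1" .
      have vv: "dot v v = ((e1+f1)^2 + (e2+f2)^2 + (e3+f3)^2)/(4*b^2)"
        using True by (simp add: v_def power2_eq_square field_simps)
      also have "\<dots> = 1" using True E F b(2) by (simp add: ee ff power2_eq_square field_simps; simp add: algebra_simps)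
      finally have v1: "dot v v = 1" .
      have "dot u p = (dot p p + dot p q)/(2*a)" "dot u q = (dot p q + dot q q)/(2*a)"
        using True by (simp_all add: u_def pp qq field_simps)
      moreover have "(1 + dot p q)/(2*a) = a" using a(2) True by (simp add: field_simps power2_eq_square)
      ultimately have up: "dot u p = a" "dot u q = a" using p q by (simp_all add: add.commute)
      have "dot v E = (dot E E + dot E F)/(2*b)" "dot v F = (dot E F + dot F F)/(2*b)"
        using True by (simp_all add: v_def ee ff field_simps)
      moreover have "(1 + dot E F)/(2*b) = b" using b(2) True by (simp add: field_simps power2_eq_square)
      ultimately have ve: "dot v E = b" "dot v F = b" using E F by (simp_all add: add.commute)
      show ?thesis using u1 v1 up ve M by (intro exI[of _ u] exI[of _ v]) simp
    next
      case False
      then have ab0: "a = 0 \<or> b = 0" using a b by auto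
      then have "a*b = 0" by auto
      moreover have "a'*b' \<ge> 0" using a'0 by simp
      ultimately have "a'*b' = 0" using True by linarith
      then have M0: "max (a*b) (sqrt ((1-a^2)*(1-b^2))) = 0" using M ab0 by auto
      define u where "u = R3 0 0 1"
      have u1: "dot u u = 1" by (simp add: u_def)
      have "dot u p * dot u E + dot u q * dot u F = 0"
      proof (cases "a = 0")
        case True
        then have "a' = 1" using a'sq a(2) by (simp add: a'_def)
        then have "b' = 0" using \<open>a'*b' = 0\<close> by simp
        then have "dot E F = 1" using b'sq by simp
        then have "F = E" using unit_dot_1[OF E F] by simp
        moreover have "dot p q = -1" using True a(2) by simp
        then have "q = R3 (-p1) (-p2) (-p3)" using unit_dot_neg1[OF p q] pp by simp
        ultimately show ?thesis by (simp add: u_def pp)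
      next
        case False
        then have "b = 0" using ab0 by simp
        then have "b' = 1" using b'sq b(2) by (simp add: b'_def)
        then have "a' = 0" using \<open>a'*b' = 0\<close> by simp
        then have "dot p q = 1" using a'sq by simp
        then have "q = p" using unit_dot_1[OF p q] by simp
        moreover have "dot E F = -1" using \<open>b = 0\<close> b(2) by simp
        then have "F = R3 (-e1) (-e2) (-e3)" using unit_dot_neg1[OF E F] ee by simp
        ultimately show ?thesis by (simp add: u_def ee)
      qed
      then show ?thesis using u1 M0 by (intro exI[of _ u] exI[of _ u]) simp
    qed
  next
    case False
    then have M: "max (a*b) (sqrt ((1-a^2)*(1-b^2))) = a'*b'" using sq by simp
    have pos: "a' > 0" "b' > 0" using False a'0 a b
      by (metis less_eq_real_def mult_eq_0_iff mult_nonneg_nonneg)+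
    define u where "u = R3 ((p1-q1)/(2*a')) ((p2-q2)/(2*a')) ((p3-q3)/(2*a'))"
    define v where "v = R3 ((e1-f1)/(2*b')) ((e2-f2)/(2*b')) ((e3-f3)/(2*b'))"
    have uu: "dot u u = ((p1-q1)^2 + (p2-q2)^2 + (p3-q3)^2)/(4*a'^2)"
      using pos by (simp add: u_def power2_eq_square field_simps)
    also have "\<dots> = 1" using pos p q a'sq by (simp add: pp qq power2_eq_square field_simps; simp add: algebra_simps)
    finally have u1: "dot u u = 1" .
    have vv: "dot v v = ((e1-f1)^2 + (e2-f2)^2 + (e3-f3)^2)/(4*b'^2)"
      using pos by (simp add: v_def power2_eq_square field_simps)
    also have "\<dots> = 1" using pos E F b'sq by (simp add: ee ff power2_eq_square field_simps; simp add: algebra_simps)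
    finally have v1: "dot v v = 1" .
    have "dot u p = (dot p p - dot p q)/(2*a')" "dot u q = (dot p q - dot q q)/(2*a')"
      using pos by (simp_all add: u_def pp qq field_simps)
    moreover have "(1 - dot p q)/(2*a') = a'" using a'sq pos by (simp add: field_simps power2_eq_square)
    moreover have "(dot p q - 1)/(2*a') = -a'" using a'sq pos by (simp add: field_simps power2_eq_square)
    ultimately have up: "dot u p = a'" "dot u q = -a'" using p q by simp_all
    have "dot v E = (dot E E - dot E F)/(2*b')" "dot v F = (dot E F - dot F F)/(2*b')"
      using pos by (simp_all add: v_def ee ff field_simps)
    moreover have "(1 - dot E F)/(2*b') = b'" using b'sq pos by (simp add: field_simps power2_eq_square)
    moreover have "(dot E F - 1)/(2*b') = -b'" using b'sq pos by (simp add: field_simps power2_eq_square)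
    ultimately have ve: "dot v E = b'" "dot v F = -b'" using E F by simp_all
    show ?thesis using u1 v1 up ve M by (intro exI[of _ u] exI[of _ v]) simp
  qed
qed


definition perp :: "cvec2 \<Rightarrow> cvec2" where
  "perp u = vector [- cnj (u$2), cnj (u$1)]"

definition mp :: "cvec2 \<Rightarrow> cvec2 \<Rightarrow> cmat2 \<Rightarrow> cmat2" where
  "mp u v X = cscale (sandwich u X) (ketbra v v) + cscale (sandwich (perp u) X) (ketbra (perp v) (perp v))"

lemma perp_simps[simp]: "perp u $ 1 = - cnj (u$2)" "perp u $ 2 = cnj (u$1)"
  by (simp_all add: perp_def)

lemma unit_c: "norm (u::cvec2) = 1 \<Longrightarrow> cnj (u$1) * u$1 + cnj (u$2) * u$2 = 1"
proof -
  assume "norm u = 1"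
  then have "cmod (u$1)^2 + cmod (u$2)^2 = 1" by (simp flip: norm2_sq)
  then have "complex_of_real (cmod (u$1)^2 + cmod (u$2)^2) = 1" by simp
  then show ?thesis by (simp add: complex_norm_square[symmetric] mult.commute)
qed

lemma norm_perp: "norm (perp u) = norm u"
proof -
  have "(norm (perp u))^2 = (norm u)^2" by (simp add: norm2_sq add.commute)
  then show ?thesis by (simp add: power2_eq_iff_nonneg)
qed

lemma sand_perp: "norm u = 1 \<Longrightarrow> sandwich u X + sandwich (perp u) X = ctrace X"
proof -
  assume "norm u = 1"
  note h = unit_c[OF this]
  have "sandwich u X + sandwich (perp u) X = (cnj (u$1) * u$1 + cnj (u$2) * u$2) * ctrace X"
    by (simp add: sandwich_expand ctrace_expand algebra_simps)
  then show ?thesis using h by simp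
qed

lemma ketbra_perp: "norm v = 1 \<Longrightarrow> ketbra v v + ketbra (perp v) (perp v) = mat 1"
proof -
  assume "norm v = 1"
  note h = unit_c[OF this]
  show ?thesis
    unfolding vec_eq_iff forall_2
    using h by (simp add: ketbra_def mat_def algebra_simps)
qed

lemma cscale_one: "cscale 1 A = A" by (simp add: cscale_def vec_eq_iff)

lemma mp_clinear: "clinear2 (mp u v)"
  unfolding clinear2_def mp_def
  apply (simp add: sandwich_add sandwich_cscale)
  by (simp add: cscale_def vec_eq_iff algebra_simps)

lemma mp_tp: "norm u = 1 \<Longrightarrow> norm v = 1 \<Longrightarrow> trace_preserving2 (mp u v)"
proof -
  assume u: "norm u = 1" and v: "norm v = 1"
  have c: "ctrace (ketbra v v) = 1" "ctrace (ketbra (perp v) (perp v)) = 1"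
    using v by (simp_all add: ctrace_ketbra norm_perp)
  show ?thesis unfolding trace_preserving2_def mp_def
    using c sand_perp[OF u] by (simp add: ctrace_add ctrace_cscale)
qed

lemma mp_unital: "norm u = 1 \<Longrightarrow> norm v = 1 \<Longrightarrow> unital2 (mp u v)"
proof -
  assume u: "norm u = 1" and v: "norm v = 1"
  have "sandwich u (mat 1) = 1" "sandwich (perp u) (mat 1) = 1"
    using u by (simp_all add: sandwich_one norm_perp)
  then show ?thesis unfolding unital2_def mp_def using ketbra_perp[OF v] by (simp add: cscale_one)
qed

lemma mp_form:
  "(\<Sum>i\<in>UNIV. \<Sum>j\<in>UNIV. cnj (x$i) * (mp u v K)$i$j * y$j)
   = (\<Sum>i\<in>UNIV. \<Sum>j\<in>UNIV. cnj ((braket v x *s u)$i) * K$i$j * ((braket v y *s u)$j))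
   + (\<Sum>i\<in>UNIV. \<Sum>j\<in>UNIV. cnj ((braket (perp v) x *s perp u)$i) * K$i$j * ((braket (perp v) y *s perp u)$j))"
  by (simp add: sum_2 mp_def cscale_def ketbra_def sandwich_expand braket_expand algebra_simps)


definition bq :: "nat \<Rightarrow> (nat \<Rightarrow> nat \<Rightarrow> cmat2) \<Rightarrow> (nat \<Rightarrow> cvec2) \<Rightarrow> complex" where
  "bq n M v = (\<Sum>a<n. \<Sum>b<n. \<Sum>i\<in>UNIV. \<Sum>j\<in>UNIV. cnj (v a $ i) * (M a b $ i $ j) * (v b $ j))"

lemma block_psd_bq: "block_psd n M \<longleftrightarrow> (\<forall>v. Im (bq n M v) = 0 \<and> Re (bq n M v) \<ge> 0)"
  by (simp add: block_psd_def bq_def Let_def)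

lemma bq_mp: "bq n (\<lambda>a b. mp u v (M a b)) w
   = bq n M (\<lambda>a. braket v (w a) *s u) + bq n M (\<lambda>a. braket (perp v) (w a) *s perp u)"
  unfolding bq_def mp_form by (simp add: sum.distrib)

lemma mp_cp: "completely_positive2 (mp u v)"
  unfolding completely_positive2_def block_psd_bq
proof (intro allI impI)
  fix n M w
  assume H: "\<forall>v. Im (bq n M v) = 0 \<and> 0 \<le> Re (bq n M v)"
  show "Im (bq n (\<lambda>a b. mp u v (M a b)) w) = 0 \<and> 0 \<le> Re (bq n (\<lambda>a b. mp u v (M a b)) w)"
    unfolding bq_mp using H by simp
qed


lemma sandwich_scaled: "cnj c * sandwich x K * d = (\<Sum>i\<in>UNIV. \<Sum>j\<in>UNIV. cnj ((c *s x)$i) * K$i$j * ((d *s x)$j))"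
  by (simp add: sandwich_expand sum_2 algebra_simps)

lemma nsw_sandwich: "nsw (\<lambda>a b. sandwich x (M a b)) w = bq 2 M (\<lambda>a. w a *s x)"
  unfolding nsw_def bq_def by (simp add: sandwich_scaled)

lemma normalize_psd:
  fixes A :: "nat \<Rightarrow> nat \<Rightarrow> complex"
  assumes H: "\<forall>w. Im (nsw A w) = 0 \<and> Re (nsw A w) \<ge> 0"
  shows "\<exists>S::nat\<Rightarrow>nat\<Rightarrow>complex. ndensity 2 S \<and> (\<forall>a<(2::nat). \<forall>b<(2::nat). complex_of_real (Re (A 0 0 + A 1 1)) * S a b = A a b)
          \<and> Re (A 0 0 + A 1 1) \<ge> 0"
proof -
  have form: "\<And>x y. Im (cnj x * A 0 0 * x + cnj x * A 0 1 * y + cnj y * A 1 0 * x + cnj y * A 1 1 * y) = 0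
                \<and> Re (cnj x * A 0 0 * x + cnj x * A 0 1 * y + cnj y * A 1 0 * x + cnj y * A 1 1 * y) \<ge> 0"
  proof -
    fix x y
    have "Im (nsw A (\<lambda>a. if a = 0 then x else y)) = 0 \<and> Re (nsw A (\<lambda>a. if a = 0 then x else y)) \<ge> 0"
      using H by blast
    then show "Im (cnj x * A 0 0 * x + cnj x * A 0 1 * y + cnj y * A 1 0 * x + cnj y * A 1 1 * y) = 0
                \<and> Re (cnj x * A 0 0 * x + cnj x * A 0 1 * y + cnj y * A 1 0 * x + cnj y * A 1 1 * y) \<ge> 0"
      by (simp add: nsw_expand)
  qed
  note P = psd22[OF form]
  define t where "t = Re (A 0 0 + A 1 1)"
  have t0: "t \<ge> 0" using P(3,4) by (simp add: t_def)
  have tc: "A 0 0 + A 1 1 = complex_of_real t" using P(1,2) by (simp add: t_def complex_eq_iff)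
  have lt2: "a < 2 \<longleftrightarrow> a = 0 \<or> a = 1" for a :: nat by auto
  show ?thesis
  proof (cases "t = 0")
    case True
    have z: "Re (A 0 0) = 0" "Re (A 1 1) = 0" using True P(3,4) by (auto simp: t_def)
    then have z2: "A 0 0 = 0" "A 1 1 = 0" using P(1,2) by (simp_all add: complex_eq_iff)
    have "cmod (A 0 1)^2 \<le> 0" using P(6) z by simp
    then have z3: "A 0 1 = 0" by simp
    then have z4: "A 1 0 = 0" using P(5) by simp
    define S where "S = (\<lambda>(a::nat) (b::nat). if a = 0 \<and> b = 0 then (1::complex) else 0)"
    have "ndensity 2 S"
      unfolding ndensity_def Let_def
    proof (intro conjI allI)
      fix v :: "nat \<Rightarrow> complex"
      have "(\<Sum>a<2. \<Sum>b<2. cnj (v a) * S a b * v b) = complex_of_real ((cmod (v 0))^2)"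
        by (simp add: sum_lt2 S_def cnj_mult_self)
      then show "Im (\<Sum>a<2. \<Sum>b<2. cnj (v a) * S a b * v b) = 0"
        "0 \<le> Re (\<Sum>a<2. \<Sum>b<2. cnj (v a) * S a b * v b)" by simp_all
    next
      show "(\<Sum>a<2. S a a) = 1" by (simp add: sum_lt2 S_def)
    qed
    moreover have "\<forall>a<(2::nat). \<forall>b<(2::nat). complex_of_real t * S a b = A a b"
      using z2 z3 z4 True by (auto simp: lt2)
    ultimately show ?thesis using t0 unfolding t_def by blast
  next
    case False
    then have tp: "t > 0" using t0 by simp
    define S where "S = (\<lambda>a b. A a b / complex_of_real t)"
    have "ndensity 2 S"
      unfolding ndensity_def Let_def
    proof (intro conjI allI)
      fix v :: "nat \<Rightarrow> complex"
      have e: "(\<Sum>a<2. \<Sum>b<2. cnj (v a) * S a b * v b) = nsw A v / complex_of_real t"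
        by (simp add: nsw_def S_def sum_divide_distrib)
      have "Im (nsw A v) = 0" "Re (nsw A v) \<ge> 0" using H by blast+
      then show "Im (\<Sum>a<2. \<Sum>b<2. cnj (v a) * S a b * v b) = 0"
        "0 \<le> Re (\<Sum>a<2. \<Sum>b<2. cnj (v a) * S a b * v b)" unfolding e using tp
        by (simp_all add: Re_divide_of_real Im_divide_of_real)
    next
      show "(\<Sum>a<2. S a a) = 1" using tc tp by (simp add: sum_lt2 S_def add_divide_distrib[symmetric])
    qed
    moreover have "\<forall>a<(2::nat). \<forall>b<(2::nat). complex_of_real t * S a b = A a b"
      using tp by (simp add: S_def)
    ultimately show ?thesis using t0 unfolding t_def by blast
  qed
qed

lemma density2_ketbra: "norm y = 1 \<Longrightarrow> density2 (ketbra y y)"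
proof -
  assume y: "norm y = 1"
  have e: "sandwich w (ketbra y y) = complex_of_real ((cmod (braket y w))^2)" for w
  proof -
    have "sandwich w (ketbra y y) = cnj (braket y w) * braket y w"
      by (simp add: sandwich_expand ketbra_def braket_expand algebra_simps)
    then show ?thesis by (simp add: cnj_mult_self)
  qed
  show ?thesis unfolding density2_def psd2_def using y by (simp add: e ctrace_ketbra)
qed


lemma lt2: "a < 2 \<longleftrightarrow> a = 0 \<or> a = (1::nat)" by auto

lemma mp_eb:
  assumes u: "norm u = 1" and v: "norm v = 1"
  shows "entanglement_breaking2 (mp u v)"
  unfolding entanglement_breaking2_def
proof (intro allI impI)
  fix \<rho> assume R: "block_density 2 \<rho>"
  have bp: "\<forall>w. Im (bq 2 \<rho> w) = 0 \<and> Re (bq 2 \<rho> w) \<ge> 0"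
    using R unfolding block_density_def block_psd_bq by blast
  have tr: "(\<Sum>a<2. ctrace (\<rho> a a)) = 1" using R unfolding block_density_def by blast
  define A where "A = (\<lambda>a b. sandwich u (\<rho> a b))"
  define B where "B = (\<lambda>a b. sandwich (perp u) (\<rho> a b))"
  have HA: "\<forall>w. Im (nsw A w) = 0 \<and> Re (nsw A w) \<ge> 0"
    unfolding A_def nsw_sandwich using bp by blast
  have HB: "\<forall>w. Im (nsw B w) = 0 \<and> Re (nsw B w) \<ge> 0"
    unfolding B_def nsw_sandwich using bp by blast
  obtain SA where SA: "ndensity 2 SA" "\<forall>a<(2::nat). \<forall>b<(2::nat). complex_of_real (Re (A 0 0 + A 1 1)) * SA a b = A a b"
      "Re (A 0 0 + A 1 1) \<ge> 0"
    using normalize_psd[OF HA] by blast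
  obtain SB where SB: "ndensity 2 SB" "\<forall>a<(2::nat). \<forall>b<(2::nat). complex_of_real (Re (B 0 0 + B 1 1)) * SB a b = B a b"
      "Re (B 0 0 + B 1 1) \<ge> 0"
    using normalize_psd[OF HB] by blast
  define p where "p = (\<lambda>k::nat. if k = 0 then Re (A 0 0 + A 1 1) else Re (B 0 0 + B 1 1))"
  define S where "S = (\<lambda>k::nat. if k = 0 then SA else SB)"
  define \<tau> where "\<tau> = (\<lambda>k::nat. if k = 0 then ketbra v v else ketbra (perp v) (perp v))"
  have "(\<forall>k<2. 0 \<le> p k \<and> ndensity 2 (S k) \<and> density2 (\<tau> k))"
    using SA SB u v by (auto simp: p_def S_def \<tau>_def lt2 density2_ketbra norm_perp)
  moreover have "(\<Sum>k<2. p k) = 1"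
  proof -
    have "(\<Sum>k<2. p k) = Re ((A 0 0 + B 0 0) + (A 1 1 + B 1 1))" by (simp add: sum_lt2 p_def)
    also have "\<dots> = Re (ctrace (\<rho> 0 0) + ctrace (\<rho> 1 1))"
      using sand_perp[OF u] by (simp add: A_def B_def)
    also have "\<dots> = 1" using tr by (simp add: sum_lt2)
    finally show ?thesis .
  qed
  moreover have "\<forall>a<2. \<forall>b<2. mp u v (\<rho> a b) = (\<Sum>k<2. cscale (complex_of_real (p k) * S k a b) (\<tau> k))"
    using SA(2) SB(2) by (simp add: sum_lt2 p_def S_def \<tau>_def mp_def A_def B_def)
  ultimately show "separable22 (\<lambda>a b. mp u v (\<rho> a b))"
    unfolding separable22_def by blast
qed

lemma mp_UE: "norm u = 1 \<Longrightarrow> norm v = 1 \<Longrightarrow> mp u v \<in> UE"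
  unfolding UE_def quantum_channel2_def
  using mp_clinear mp_cp mp_tp mp_unital mp_eb by blast


lemma dot_comm: "dot x y = dot y x"
  by (cases x; cases y) (simp add: mult.commute)

lemma bloch_surj:
  assumes "dot n n = 1"
  shows "\<exists>u::cvec2. norm u = 1 \<and> bl (u$1) (u$2) = n"
proof -
  obtain n1 n2 n3 where nn: "n = R3 n1 n2 n3" by (cases n)
  have N: "n1^2 + n2^2 + n3^2 = 1" using assms by (simp add: nn power2_eq_square)
  have n3: "n3^2 \<le> 1" using N zero_le_power2[of n1] zero_le_power2[of n2] by linarith
  then have "\<bar>n3\<bar> \<le> 1" by (simp add: abs_square_le_1)
  then have n3l: "n3 \<ge> -1" by linarith
  show ?thesis
  proof (cases "n3 = -1")
    case True
    then have "n1^2 + n2^2 = 0" using N by simp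
    then have z: "n1 = 0" "n2 = 0" by (simp_all add: sum_squares_eq_zero_iff)
    define u :: cvec2 where "u = vector [0, 1]"
    have "(norm u)^2 = 1" unfolding norm2_sq by (simp add: u_def)
    then have "norm u = 1" using norm_ge_zero[of u] by (auto simp: power2_eq_1_iff)
    moreover have "bl (u$1) (u$2) = n" by (simp add: bl_def u_def nn z True)
    ultimately show ?thesis by blast
  next
    case False
    then have n3p: "1 + n3 > 0" using n3l by simp
    define r where "r = sqrt ((1 + n3)/2)"
    have rp: "r > 0" using n3p by (simp add: r_def)
    have r2: "r^2 = (1 + n3)/2" using n3p by (simp add: r_def)
    define u :: cvec2 where "u = vector [complex_of_real r, Complex n1 n2 / complex_of_real (2*r)]"
    have c2: "cmod (Complex n1 n2 / complex_of_real (2*r))^2 = (n1^2 + n2^2)/(4*r^2)"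
      using rp by (simp add: norm_divide cmod_power2 power_divide power_mult_distrib)
    have c2': "(n1^2 + n2^2)/(4*r^2) = (1 - n3)/2"
    proof -
      have "n1^2 + n2^2 = (1 - n3)*(1 + n3)" using N by (simp add: algebra_simps power2_eq_square)
      moreover have "4*r^2 = 2*(1+n3)" using r2 by simp
      ultimately have "(n1^2 + n2^2)/(4*r^2) = ((1 - n3)*(1 + n3))/(2*(1+n3))" by simp
      also have "\<dots> = (1 - n3)/2" using n3p by (simp add: field_simps)
      finally show ?thesis .
    qed
    have "(norm u)^2 = 1" unfolding norm2_sq using r2 c2 c2' by (simp add: u_def)
    then have "norm u = 1" using norm_ge_zero[of u] by (auto simp: power2_eq_1_iff)
    moreover have "bl (u$1) (u$2) = n"
    proof -
      have w: "cnj (complex_of_real r) * (Complex n1 n2 / complex_of_real (2*r)) = Complex (n1/2) (n2/2)"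
        using rp by (simp add: complex_eq_iff)
      have "cmod (complex_of_real r)^2 = r^2" by simp
      then have h3: "cmod (complex_of_real r)^2 - (n1^2 + n2^2)/(4*r^2) = n3" unfolding c2' by (simp add: r2 field_simps)
      have ue: "u$1 = complex_of_real r" "u$2 = Complex n1 n2 / complex_of_real (2*r)" by (simp_all add: u_def)
      show ?thesis unfolding bl_def ue w c2 h3 nn by simp
    qed
    ultimately show ?thesis by blast
  qed
qed

lemma sandwich_ketbra: "sandwich w (ketbra y y) = complex_of_real ((cmod (braket y w))^2)"
proof -
  have "sandwich w (ketbra y y) = cnj (braket y w) * braket y w"
    by (simp add: sandwich_expand ketbra_def braket_expand algebra_simps)
  then show ?thesis by (simp add: cnj_mult_self)
qed

lemma braket_perp: "cmod (braket x u)^2 + cmod (braket x (perp u))^2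
   = (cmod (x$1)^2 + cmod (x$2)^2) * (cmod (u$1)^2 + cmod (u$2)^2)"
  unfolding braket_expand cmod_power2 by (simp add: algebra_simps power2_eq_square)


lemma braket_swap: "braket y x = cnj (braket x y)"
  by (simp add: braket_expand)

lemma cmod_braket_swap: "cmod (braket y x) = cmod (braket x y)"
  by (subst braket_swap) (rule complex_mod_cnj)

lemma fid_helper: "(1+s)/2 * ((1+t)/2) + (1 - (1+s)/2) * (1 - (1+t)/2) = (1 + s*t)/(2::real)"
  by (simp add: field_simps)

lemma mp_fid:
  assumes u: "norm u = 1" and v: "norm v = 1" and x: "norm x = 1" and y: "norm y = 1"
  shows "Re (sandwich y (mp u v (ketbra x x)))
     = (1 + dot (bl (u$1) (u$2)) (bl (x$1) (x$2)) * dot (bl (v$1) (v$2)) (bl (y$1) (y$2)))/2"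
proof -
  have n: "cmod (u$1)^2 + cmod (u$2)^2 = 1" "cmod (v$1)^2 + cmod (v$2)^2 = 1"
     "cmod (x$1)^2 + cmod (x$2)^2 = 1" "cmod (y$1)^2 + cmod (y$2)^2 = 1"
    using u v x y by (simp_all flip: norm2_sq)
  define X where "X = cmod (braket x u)^2"
  define Y where "Y = cmod (braket v y)^2"
  have X: "X = (1 + dot (bl (u$1) (u$2)) (bl (x$1) (x$2)))/2"
    using bl_braket[of x u] n unfolding X_def by (simp add: dot_comm)
  have Y: "Y = (1 + dot (bl (v$1) (v$2)) (bl (y$1) (y$2)))/2"
    using bl_braket[of v y] n unfolding Y_def by simp
  have X': "cmod (braket x (perp u))^2 = 1 - X"
    using braket_perp[of x u] unfolding n X_def by simp
  have Y': "cmod (braket (perp v) y)^2 = 1 - Y"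
    using braket_perp[of y v] unfolding n Y_def cmod_braket_swap[of y] by simp
  have s1: "sandwich u (ketbra x x) = complex_of_real X" unfolding sandwich_ketbra X_def ..
  have s2: "sandwich (perp u) (ketbra x x) = complex_of_real (1 - X)" unfolding sandwich_ketbra X' ..
  have s3: "sandwich y (ketbra v v) = complex_of_real Y" unfolding sandwich_ketbra Y_def ..
  have s4: "sandwich y (ketbra (perp v) (perp v)) = complex_of_real (1 - Y)" unfolding sandwich_ketbra Y' ..
  have "sandwich y (mp u v (ketbra x x)) = complex_of_real X * complex_of_real Y + complex_of_real (1 - X) * complex_of_real (1 - Y)"
    unfolding mp_def sandwich_add sandwich_cscale s1 s2 s3 s4 ..
  then have "Re (sandwich y (mp u v (ketbra x x))) = X * Y + (1 - X) * (1 - Y)"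
    unfolding of_real_mult[symmetric] of_real_add[symmetric] by (metis Re_complex_of_real)
  also have "\<dots> = (1 + dot (bl (u$1) (u$2)) (bl (x$1) (x$2)) * dot (bl (v$1) (v$2)) (bl (y$1) (y$2)))/2"
    unfolding X Y by (rule fid_helper)
  finally show ?thesis .
qed


lemma ketbra_dist:
  fixes e1 e2 f1 f2 :: complex
  shows "cmod (e1 * cnj e1 - f1 * cnj f1)^2 + cmod (e1 * cnj e2 - f1 * cnj f2)^2
       + cmod (e2 * cnj e1 - f2 * cnj f1)^2 + cmod (e2 * cnj e2 - f2 * cnj f2)^2
     = (cmod e1^2 + cmod e2^2)^2 + (cmod f1^2 + cmod f2^2)^2 - 2 * cmod (cnj e1 * f1 + cnj e2 * f2)^2"
  unfolding cmod_power2 by (simp add: power2_eq_square algebra_simps)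


lemma unit_sq: "norm (x::cvec2) = 1 \<Longrightarrow> cmod (x$1)^2 + cmod (x$2)^2 = 1"
  by (simp flip: norm2_sq)

lemma ketbra_eq:
  assumes e: "norm e = 1" and f: "norm f = 1" and c: "cmod (braket e f) = 1"
  shows "ketbra e e = ketbra f f"
proof -
  have "cmod (e$1 * cnj (e$1) - f$1 * cnj (f$1))^2 + cmod (e$1 * cnj (e$2) - f$1 * cnj (f$2))^2
       + cmod (e$2 * cnj (e$1) - f$2 * cnj (f$1))^2 + cmod (e$2 * cnj (e$2) - f$2 * cnj (f$2))^2 = 0"
    unfolding ketbra_dist using unit_sq[OF e] unit_sq[OF f] c by (simp add: braket_expand)
  then have "cmod (e$1 * cnj (e$1) - f$1 * cnj (f$1)) = 0" "cmod (e$1 * cnj (e$2) - f$1 * cnj (f$2)) = 0"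
     "cmod (e$2 * cnj (e$1) - f$2 * cnj (f$1)) = 0" "cmod (e$2 * cnj (e$2) - f$2 * cnj (f$2)) = 0"
    by (simp_all add: add_nonneg_eq_0_iff)
  then show ?thesis unfolding vec_eq_iff forall_2 ketbra_def by simp
qed

lemma cmod_braket_le1:
  assumes "norm x = 1" "norm y = 1"
  shows "cmod (braket x y) \<le> 1" "cmod (braket x y) \<ge> 0"
proof -
  have "cmod (braket x y)^2 + cmod (braket x (perp y))^2 = 1"
    using braket_perp[of x y] unit_sq[OF assms(1)] unit_sq[OF assms(2)] by simp
  then have "cmod (braket x y)^2 \<le> 1" by (smt (verit) zero_le_power2)
  then show "cmod (braket x y) \<le> 1" by (simp add: power_le_one_iff abs_square_le_1)
  show "cmod (braket x y) \<ge> 0" by simp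
qed

lemma V_iff:
  fixes a b :: real
  assumes a: "0 \<le> a" "a \<le> 1" and b: "0 \<le> b" "b \<le> 1"
  shows "(1 + max (a*b) (sqrt ((1-a^2)*(1-b^2))))/2 = 1 \<longleftrightarrow> (a = 1 \<and> b = 1) \<or> (a = 0 \<and> b = 0)"
    "(1 + max (a*b) (sqrt ((1-a^2)*(1-b^2))))/2 \<le> 1"
proof -
  have a2: "0 \<le> 1 - a^2" "1 - a^2 \<le> 1" using a by (simp_all add: power_le_one)
  have b2: "0 \<le> 1 - b^2" "1 - b^2 \<le> 1" using b by (simp_all add: power_le_one)
  have ab: "a*b \<le> 1" using a b by (simp add: mult_le_one)
  have pr: "(1-a^2)*(1-b^2) \<le> 1" using a2 b2 by (simp add: mult_le_one)
  have s1: "sqrt ((1-a^2)*(1-b^2)) \<le> 1" using pr by simp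
  show "(1 + max (a*b) (sqrt ((1-a^2)*(1-b^2))))/2 \<le> 1" using ab s1 by simp
  show "(1 + max (a*b) (sqrt ((1-a^2)*(1-b^2))))/2 = 1 \<longleftrightarrow> (a = 1 \<and> b = 1) \<or> (a = 0 \<and> b = 0)"
  proof
    assume "(1 + max (a*b) (sqrt ((1-a^2)*(1-b^2))))/2 = 1"
    then have "max (a*b) (sqrt ((1-a^2)*(1-b^2))) = 1" by simp
    then have "a*b = 1 \<or> sqrt ((1-a^2)*(1-b^2)) = 1" by (metis max_def)
    then show "(a = 1 \<and> b = 1) \<or> (a = 0 \<and> b = 0)"
    proof
      assume h: "a*b = 1"
      have "a*b \<le> a" using a b by (simp add: mult_left_le)
      then have "a = 1" using h a by simp
      then have "b = 1" using h by simp
      then show ?thesis using \<open>a = 1\<close> by simp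
    next
      assume "sqrt ((1-a^2)*(1-b^2)) = 1"
      then have h: "(1-a^2)*(1-b^2) = 1" by simp
      have "(1-a^2)*(1-b^2) \<le> 1-a^2" using a2 b2 by (simp add: mult_left_le)
      then have "a^2 = 0" using h a2 by simp
      have "(1-a^2)*(1-b^2) \<le> 1-b^2" using mult_left_le_one_le[of "1-b^2" "1-a^2"] a2 b2 by simp
      then have "b^2 = 0" using h b2 by simp
      then show ?thesis using \<open>a^2 = 0\<close> by simp
    qed
  next
    assume "(a = 1 \<and> b = 1) \<or> (a = 0 \<and> b = 0)"
    then show "(1 + max (a*b) (sqrt ((1-a^2)*(1-b^2))))/2 = 1" by auto
  qed
qed


lemma sand_self: "norm x = 1 \<Longrightarrow> sandwich x (ketbra x x) = 1"
proof -
  assume x: "norm x = 1"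
  have "braket x x = 1" using unit_c[OF x] by (simp add: braket_expand)
  then show ?thesis by (simp add: sandwich_ketbra)
qed

lemma sand_perp_self: "norm x = 1 \<Longrightarrow> sandwich (perp x) (ketbra x x) = 0"
proof -
  assume x: "norm x = 1"
  have "braket x x = 1" using unit_c[OF x] by (simp add: braket_expand)
  then have "cmod (braket x (perp x))^2 = 0" using braket_perp[of x x] unit_sq[OF x] by simp
  then show ?thesis by (simp add: sandwich_ketbra)
qed

theorem corollary3:
  fixes \<psi> \<phi> e f :: cvec2
  assumes "norm \<psi> = 1" and "norm \<phi> = 1" and "norm e = 1" and "norm f = 1"
  defines "F \<equiv> (\<lambda>\<Psi>. Re (sandwich e (\<Psi> (ketbra \<psi> \<psi>))) / 2
                     + Re (sandwich f (\<Psi> (ketbra \<phi> \<phi>))) / 2)"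
      and "a \<equiv> cmod (braket \<psi> \<phi>)" and "b \<equiv> cmod (braket e f)"
      and "V \<equiv> (1 + max (cmod (braket \<psi> \<phi>) * cmod (braket e f))
                    (sqrt ((1 - (cmod (braket \<psi> \<phi>))\<^sup>2) * (1 - (cmod (braket e f))\<^sup>2)))) / 2"
  shows "(\<exists>\<Psi>\<in>UE. F \<Psi> = V) \<and> (\<forall>\<Psi>\<in>UE. F \<Psi> \<le> V)
         \<and> (V = 1 \<longleftrightarrow> (a = 1 \<and> b = 1) \<or> (a = 0 \<and> b = 0))
         \<and> (jointly_convertible UE \<psi> \<phi> e f \<longleftrightarrow> (a = 1 \<and> b = 1) \<or> (a = 0 \<and> b = 0))"
proof -
  note n = assms(1-4)
  have a01: "0 \<le> a" "a \<le> 1" using cmod_braket_le1[OF n(1,2)] by (simp_all add: a_def)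
  have b01: "0 \<le> b" "b \<le> 1" using cmod_braket_le1[OF n(3,4)] by (simp_all add: b_def)
  have Vab: "V = (1 + max (a*b) (sqrt ((1-a^2)*(1-b^2))))/2" by (simp add: V_def a_def b_def)
  have Viff: "V = 1 \<longleftrightarrow> (a = 1 \<and> b = 1) \<or> (a = 0 \<and> b = 0)"
    unfolding Vab by (rule V_iff(1)[OF a01 b01])
  have Vle: "V \<le> 1" unfolding Vab by (rule V_iff(2)[OF a01 b01])
  have up: "\<forall>\<Psi>\<in>UE. F \<Psi> \<le> V"
    unfolding F_def V_def using upper[OF _ n] by blast
  have ex: "\<exists>\<Psi>\<in>UE. F \<Psi> = V"
  proof -
    let ?p = "bl (\<psi>$1) (\<psi>$2)" and ?q = "bl (\<phi>$1) (\<phi>$2)"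
    let ?E = "bl (e$1) (e$2)" and ?F = "bl (f$1) (f$2)"
    have un: "dot ?p ?p = 1" "dot ?q ?q = 1" "dot ?E ?E = 1" "dot ?F ?F = 1"
      unfolding bl_unit unit_sq[OF n(1)] unit_sq[OF n(2)] unit_sq[OF n(3)] unit_sq[OF n(4)] by simp_all
    have a2: "a^2 = (1 + dot ?p ?q)/2"
      using bl_braket[of \<psi> \<phi>] unit_sq[OF n(1)] unit_sq[OF n(2)] by (simp add: a_def)
    have b2: "b^2 = (1 + dot ?E ?F)/2"
      using bl_braket[of e f] unit_sq[OF n(3)] unit_sq[OF n(4)] by (simp add: b_def)
    obtain uu vv where uv: "dot uu uu = 1" "dot vv vv = 1"
      "dot uu ?p * dot vv ?E + dot uu ?q * dot vv ?F = 2 * max (a*b) (sqrt ((1-a^2)*(1-b^2)))"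
      using choose_dirs[OF un a01(1) a2 b01(1) b2] by blast
    obtain u :: cvec2 where u: "norm u = 1" "bl (u$1) (u$2) = uu" using bloch_surj[OF uv(1)] by blast
    obtain v :: cvec2 where v: "norm v = 1" "bl (v$1) (v$2) = vv" using bloch_surj[OF uv(2)] by blast
    have "F (mp u v) = (1 + dot uu ?p * dot vv ?E)/2/2 + (1 + dot uu ?q * dot vv ?F)/2/2"
      unfolding F_def mp_fid[OF u(1) v(1) n(1) n(3)] mp_fid[OF u(1) v(1) n(2) n(4)] u(2) v(2) by simp
    also have "\<dots> = V" unfolding Vab using uv(3) by (simp add: field_simps)
    finally show ?thesis using mp_UE[OF u(1) v(1)] by blast
  qed
  have jc: "jointly_convertible UE \<psi> \<phi> e f \<longleftrightarrow> (a = 1 \<and> b = 1) \<or> (a = 0 \<and> b = 0)"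
  proof
    assume "jointly_convertible UE \<psi> \<phi> e f"
    then obtain \<Psi> where P: "\<Psi> \<in> UE" "\<Psi> (ketbra \<psi> \<psi>) = ketbra e e" "\<Psi> (ketbra \<phi> \<phi>) = ketbra f f"
      unfolding jointly_convertible_def by blast
    have "F \<Psi> = 1" unfolding F_def P(2,3) using sand_self[OF n(3)] sand_self[OF n(4)] by simp
    then have "V = 1" using up P(1) Vle by force
    then show "(a = 1 \<and> b = 1) \<or> (a = 0 \<and> b = 0)" using Viff by simp
  next
    assume C: "(a = 1 \<and> b = 1) \<or> (a = 0 \<and> b = 0)"
    have m1: "mp \<psi> e (ketbra \<psi> \<psi>) = ketbra e e"
      unfolding mp_def sand_self[OF n(1)] sand_perp_self[OF n(1)] by (simp add: cscale_one cscale_zero)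
    have s1: "sandwich \<psi> (ketbra \<phi> \<phi>) = complex_of_real (a^2)"
      unfolding sandwich_ketbra a_def cmod_braket_swap[of \<phi>] ..
    have r: "cmod (braket \<phi> (perp \<psi>))^2 = 1 - a^2"
      using braket_perp[of \<phi> \<psi>] unit_sq[OF n(1)] unit_sq[OF n(2)]
      unfolding a_def cmod_braket_swap[of \<phi> \<psi>] by simp
    have s2: "sandwich (perp \<psi>) (ketbra \<phi> \<phi>) = complex_of_real (1 - a^2)"
      unfolding sandwich_ketbra r ..
    have "mp \<psi> e (ketbra \<phi> \<phi>) = ketbra f f"
      using C
    proof
      assume ab: "a = 1 \<and> b = 1"
      then have "mp \<psi> e (ketbra \<phi> \<phi>) = ketbra e e"
        unfolding mp_def s1 s2 by (simp add: cscale_one cscale_zero)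
      also have "\<dots> = ketbra f f" using ketbra_eq[OF n(3,4)] ab by (simp add: b_def)
      finally show ?thesis .
    next
      assume ab: "a = 0 \<and> b = 0"
      then have "mp \<psi> e (ketbra \<phi> \<phi>) = ketbra (perp e) (perp e)"
        unfolding mp_def s1 s2 by (simp add: cscale_one cscale_zero)
      also have "\<dots> = ketbra f f"
      proof (rule ketbra_eq)
        show "norm (perp e) = 1" using n(3) by (simp add: norm_perp)
        show "norm f = 1" by (rule n(4))
        have "cmod (braket f e) = 0" using ab by (simp add: b_def cmod_braket_swap)
        then have "cmod (braket f (perp e))^2 = 1"
          using braket_perp[of f e] unit_sq[OF n(3)] unit_sq[OF n(4)] by simp
        then have "cmod (braket f (perp e)) = 1" using norm_ge_zero[of "braket f (perp e)"] by (auto simp: power2_eq_1_iff)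
        then show "cmod (braket (perp e) f) = 1" by (simp add: cmod_braket_swap)
      qed
      finally show ?thesis .
    qed
    then show "jointly_convertible UE \<psi> \<phi> e f"
      unfolding jointly_convertible_def using m1 mp_UE[OF n(1) n(3)] by blast
  qed
  show ?thesis using ex up Viff jc by blast
qed


end
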